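(* For every $n\in\{1,\dots,N\}$: (i) $Y_n\ge L_n$ almost surely, so $F_{Y_n}(y)\le F_{L_n}(y)$ for all $y\ge 0$; (ii) as $y\to 0^+$, $$F_{L_n}(y)\sim \frac{N!}{(N-n)!(n-1)!}\sum_{i=0}^{N-n}\binom{N-n}{i}\frac{(-1)^i}{n+i}\,\xi_1^{\,n+i}\,y^{2m_sK(n+i)};$$ (iii) in the continuous-phase case, as $y\to0^+$, $$F_{Y_{c,n}}(y)\sim \frac{N!}{(N-n)!(n-1)!}\sum_{i=0}^{N-n}\binom{N-n}{i}\frac{(-1)^i}{n+i}\,\xi_2^{\,n+i}\,y^{2m_sK(n+i)}.$$ Here $F_X$ denotes the CDF of $X$ and $f\sim g$ means $f/g\to1$.
   Context: Fix integers $N\ge1$, $K\ge1$, $b\ge2$ and a real $\beta\in(0,1]$. Let $m_G,m_g\ge 1/2$ with $m_G\neq m_g$; put $m_s=\min\{m_G,m_g\}$, $m_l=\max\{m_G,m_g\}$. For $n=1,\dots,N$ and $k=1,\dots,K$ let $G_k^n,g_k^n$ be mutually independent complex random variables such that $|G_k^n|$ has the Nakagami density $f(x)=\frac{2m^m}{\Gamma(m)}x^{2m-1}e^{-mx^2}$ ($x\ge0$) with $m=m_G$, and $|g_k^n|$ has this density with $m=m_g$. Let $\Delta=2\pi/2^b$. For each $n$ fix a constant $\tilde\theta_n\in[0,2\pi)$ and set $\bar\theta_k^n=\tilde\theta_n-\arg(G_k^ng_k^n)$, $\hat\theta_k^n=\Delta(\lfloor\bar\theta_k^n/\Delta\rfloor+\tfrac12)$,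 $\epsilon_k^n=\hat\theta_k^n-\bar\theta_k^n$ (so $|\epsilon_k^n|\le \pi/2^b$). Define the discrete-phase gain $Y^{(n)}=\beta\big|\sum_{k=1}^K|G_k^n||g_k^n|e^{j\epsilon_k^n}\big|$ ($j=\sqrt{-1}$) and the continuous-phase gain $Y_c^{(n)}=\beta\sum_{k=1}^K|G_k^n||g_k^n|$. Let $Y_1\le\dots\le Y_N$ be the order statistics of $Y^{(1)},\dots,Y^{(N)}$ and $Y_{c,1}\le\dots\le Y_{c,N}$ those of $Y_c^{(1)},\dots,Y_c^{(N)}$. Let $a=\beta\cos(\pi/2^b)$ and let $L_1\le\dots\le L_N$ be the order statistics of $a\sum_{k=1}^K|G_k^n||g_k^n|$, $n=1,\dots,N$. Define $\varphi=\frac{\sqrt\pi\,4^{m_s-m_l+1}(m_sm_l)^{m_s}\Gamma(2m_s)\Gamma(2m_l-2m_s)}{\Gamma(m_s)\Gamma(m_l)\Gamma(m_l-m_s+\frac12)}$, $\zeta_1=\frac{\varphi^K}{2m_sK\,\Gamma(2m_sK)}$, $\xi_1=\zeta_1/a^{2m_sK}$, $\xi_2=\zeta_1/\beta^{2m_sK}$. *)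

theory Defs
  imports "HOL-Probability.Probability" "HOL-Library.Landau_Symbols"
begin

definition nakagami_pdf :: "real \<Rightarrow> real \<Rightarrow> real" where
  "nakagami_pdf m x = (if 0 \<le> x then 2 * m powr m / Gamma m * x powr (2*m - 1) * exp (- m * x\<^sup>2) else 0)"

definition cdf_of :: "'a measure \<Rightarrow> ('a \<Rightarrow> real) \<Rightarrow> real \<Rightarrow> real" where
  "cdf_of M X y = measure M {\<omega> \<in> space M. X \<omega> \<le> y}"

definition ord_stat :: "nat \<Rightarrow> (nat \<Rightarrow> 'a \<Rightarrow> real) \<Rightarrow> nat \<Rightarrow> 'a \<Rightarrow> real" where
  "ord_stat N X n \<omega> = sort (map (\<lambda>i. X i \<omega>) [1..<N+1]) ! (n - 1)"

definition qstep :: "nat \<Rightarrow> real" where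
  "qstep b = 2 * pi / 2 ^ b"

definition phase_bar :: "(nat \<Rightarrow> real) \<Rightarrow> (nat \<Rightarrow> nat \<Rightarrow> 'a \<Rightarrow> complex) \<Rightarrow> (nat \<Rightarrow> nat \<Rightarrow> 'a \<Rightarrow> complex)
    \<Rightarrow> nat \<Rightarrow> nat \<Rightarrow> 'a \<Rightarrow> real" where
  "phase_bar th G g k n \<omega> = th n - Arg (G k n \<omega> * g k n \<omega>)"

definition phase_hat :: "nat \<Rightarrow> (nat \<Rightarrow> real) \<Rightarrow> (nat \<Rightarrow> nat \<Rightarrow> 'a \<Rightarrow> complex) \<Rightarrow> (nat \<Rightarrow> nat \<Rightarrow> 'a \<Rightarrow> complex)
    \<Rightarrow> nat \<Rightarrow> nat \<Rightarrow> 'a \<Rightarrow> real" where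
  "phase_hat b th G g k n \<omega> =
     qstep b * (of_int \<lfloor>phase_bar th G g k n \<omega> / qstep b\<rfloor> + 1/2)"

definition phase_err :: "nat \<Rightarrow> (nat \<Rightarrow> real) \<Rightarrow> (nat \<Rightarrow> nat \<Rightarrow> 'a \<Rightarrow> complex) \<Rightarrow> (nat \<Rightarrow> nat \<Rightarrow> 'a \<Rightarrow> complex)
    \<Rightarrow> nat \<Rightarrow> nat \<Rightarrow> 'a \<Rightarrow> real" where
  "phase_err b th G g k n \<omega> = phase_hat b th G g k n \<omega> - phase_bar th G g k n \<omega>"

definition Y_disc :: "nat \<Rightarrow> nat \<Rightarrow> real \<Rightarrow> (nat \<Rightarrow> real) \<Rightarrow> (nat \<Rightarrow> nat \<Rightarrow> 'a \<Rightarrow> complex)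
    \<Rightarrow> (nat \<Rightarrow> nat \<Rightarrow> 'a \<Rightarrow> complex) \<Rightarrow> nat \<Rightarrow> 'a \<Rightarrow> real" where
  "Y_disc K b \<beta> th G g n \<omega> = \<beta> * cmod (\<Sum>k=1..K. complex_of_real (cmod (G k n \<omega>) * cmod (g k n \<omega>))
        * cis (phase_err b th G g k n \<omega>))"

definition Y_cont :: "nat \<Rightarrow> real \<Rightarrow> (nat \<Rightarrow> nat \<Rightarrow> 'a \<Rightarrow> complex)
    \<Rightarrow> (nat \<Rightarrow> nat \<Rightarrow> 'a \<Rightarrow> complex) \<Rightarrow> nat \<Rightarrow> 'a \<Rightarrow> real" where
  "Y_cont K \<beta> G g n \<omega> = \<beta> * (\<Sum>k=1..K. cmod (G k n \<omega>) * cmod (g k n \<omega>))"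

definition L_low :: "nat \<Rightarrow> nat \<Rightarrow> real \<Rightarrow> (nat \<Rightarrow> nat \<Rightarrow> 'a \<Rightarrow> complex)
    \<Rightarrow> (nat \<Rightarrow> nat \<Rightarrow> 'a \<Rightarrow> complex) \<Rightarrow> nat \<Rightarrow> 'a \<Rightarrow> real" where
  "L_low K b \<beta> G g n \<omega> = \<beta> * cos (pi / 2 ^ b) * (\<Sum>k=1..K. cmod (G k n \<omega>) * cmod (g k n \<omega>))"

definition phi_const :: "real \<Rightarrow> real \<Rightarrow> real" where
  "phi_const ms ml = sqrt pi * 4 powr (ms - ml + 1) * (ms * ml) powr ms * Gamma (2*ms) * Gamma (2*ml - 2*ms)
      / (Gamma ms * Gamma ml * Gamma (ml - ms + 1/2))"

definition zeta1 :: "nat \<Rightarrow> real \<Rightarrow> real \<Rightarrow> real" where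
  "zeta1 K ms ml = phi_const ms ml ^ K / (2 * ms * real K * Gamma (2 * ms * real K))"

definition asym_cdf :: "nat \<Rightarrow> nat \<Rightarrow> nat \<Rightarrow> real \<Rightarrow> real \<Rightarrow> real \<Rightarrow> real" where
  "asym_cdf N n K ms \<xi> y = fact N / (fact (N - n) * fact (n - 1)) *
     (\<Sum>i=0..N-n. real (N - n choose i) * (-1) ^ i / real (n + i) * \<xi> ^ (n + i)
        * y powr (2 * ms * real K * real (n + i)))"

end

theory Submission
  imports Defs
begin


lemma hi_pow_shift:
  fixes a y t :: real
  assumes "a \<ge> 1" "t \<le> y"
  shows "((\<lambda>s. a * (y - s) powr (a - 1)) has_integral (y - t) powr a) {t..y}"
proof -
  have "((\<lambda>x. x powr (a-1)) has_integral ((y-t) powr (a-1+1) / (a-1+1))) {0..y-t}"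
    using assms by (intro has_integral_powr_from_0) auto
  then have h: "((\<lambda>x. x powr (a-1)) has_integral ((y-t) powr a / a)) (cbox 0 (y-t))"
    by simp
  have "((\<lambda>x. (\<lambda>x. x powr (a-1)) ((-1) *\<^sub>R x + y)) has_integral (1 / (\<bar>-1::real\<bar> ^ DIM(real))) *\<^sub>R ((y-t) powr a / a))
     ((\<lambda>x. (1 / (-1)) *\<^sub>R x + -((1 / (-1)) *\<^sub>R y)) ` cbox 0 (y-t))"
    by (rule has_integral_affinity[OF h]) auto
  moreover have "((\<lambda>x. (1 / (-1::real)) *\<^sub>R x + -((1 / (-1)) *\<^sub>R y)) ` cbox 0 (y-t)) = {t..y}"
  proof -
    have "(\<lambda>x::real. (1 / (-1::real)) *\<^sub>R x + -((1 / (-1)) *\<^sub>R y)) = (\<lambda>x. y - x)" by auto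
    moreover have "(\<lambda>x. y - x) ` {0..y-t} = {t..y}"
    proof
      show "(\<lambda>x. y - x) ` {0..y-t} \<subseteq> {t..y}" by auto
      show "{t..y} \<subseteq> (\<lambda>x. y - x) ` {0..y-t}"
      proof
        fix s assume "s \<in> {t..y}"
        then show "s \<in> (\<lambda>x. y - x) ` {0..y-t}" by (intro image_eqI[of _ _ "y - s"]) auto
      qed
    qed
    ultimately show ?thesis by simp
  qed
  ultimately have "((\<lambda>x. (y - x) powr (a-1)) has_integral ((y-t) powr a / a)) {t..y}"
    by simp
  from has_integral_mult_right[OF this, of a] show ?thesis using assms by simp
qed

lemma hi_beta:
  fixes a b y :: real
  assumes "a \<ge> 1" "b > 0" "y > 0"
  shows "((\<lambda>s. a * (y - s) powr (a - 1) * s powr b) has_integral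
            (Gamma (a+1) * Gamma (b+1) / Gamma (a+b+1) * y powr (a+b))) {0..y}"
proof -
  have "((\<lambda>x. x powr (b+1 - 1) * (1 - x) powr (a - 1)) has_integral Beta (b+1) a) {0..1}"
    using assms by (intro has_integral_Beta_real) auto
  then have h: "((\<lambda>x. x powr b * (1 - x) powr (a - 1)) has_integral Beta (b+1) a) (cbox 0 1)" by simp
  have "((\<lambda>s. (\<lambda>x. x powr b * (1 - x) powr (a - 1)) ((1/y) *\<^sub>R s + 0)) has_integral (Beta (b+1) a /\<^sub>R (1/y) ^ DIM(real)))
       (cbox ((0 - 0) /\<^sub>R (1/y)) ((1 - 0) /\<^sub>R (1/y)))"
    by (rule has_integral_affinity'[OF h]) (use assms in auto)
  then have h2: "((\<lambda>s. (s/y) powr b * (1 - s/y) powr (a - 1)) has_integral (Beta (b+1) a * y)) {0..y}"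
    by (simp add: mult.commute)
  have eq: "a * (y - s) powr (a - 1) * s powr b = (a * y powr (a+b-1)) * ((s/y) powr b * (1 - s/y) powr (a - 1))"
    if "s \<in> {0..y}" for s
  proof -
    have "1 - s/y = (y - s)/y" using assms by (simp add: field_simps)
    then have "(s/y) powr b * (1 - s/y) powr (a - 1) = s powr b * (y-s) powr (a-1) / (y powr b * y powr (a-1))"
      using that assms by (simp add: powr_divide)
    also have "y powr b * y powr (a-1) = y powr (a+b-1)" by (simp add: powr_add[symmetric] algebra_simps)
    finally show ?thesis using assms by (simp add: field_simps)
  qed
  have "((\<lambda>s. (a * y powr (a+b-1)) * ((s/y) powr b * (1 - s/y) powr (a - 1))) has_integral
          (a * y powr (a+b-1)) * (Beta (b+1) a * y)) {0..y}"
    by (rule has_integral_mult_right[OF h2])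
  then have "((\<lambda>s. a * (y - s) powr (a - 1) * s powr b) has_integral
          (a * y powr (a+b-1)) * (Beta (b+1) a * y)) {0..y}"
    by (rule has_integral_eq[rotated]) (use eq in presburger)
  moreover have "(a * y powr (a+b-1)) * (Beta (b+1) a * y) = Gamma (a+1) * Gamma (b+1) / Gamma (a+b+1) * y powr (a+b)"
  proof -
    have "y powr (a+b-1) * y = y powr (a+b)" using assms by (simp add: powr_add[symmetric] powr_diff)
    moreover have "a * Beta (b+1) a = Gamma (a+1) * Gamma (b+1) / Gamma (a+b+1)"
    proof -
      have "a \<notin> \<int>\<^sub>\<le>\<^sub>0" using assms by (auto elim!: nonpos_Ints_cases)
      then have "Gamma (a+1) = a * Gamma a" by (rule Gamma_plus1)
      then show ?thesis by (simp add: Beta_def add_ac)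
    qed
    moreover have "(a * y powr (a+b-1)) * (Beta (b+1) a * y) = (a * Beta (b+1) a) * (y powr (a+b-1) * y)"
      by (simp only: ac_simps)
    ultimately show ?thesis by simp
  qed
  ultimately show ?thesis by simp
qed




lemma nn_int_powr:
  fixes C p u :: real
  assumes "C \<ge> 0" "p > -1" "u \<ge> 0"
  shows "(\<integral>\<^sup>+x. ennreal (indicator {0..u} x * (C * x powr p)) \<partial>lborel) = ennreal (C * (u powr (p+1) / (p+1)))"
proof -
  have "((\<lambda>x. C * x powr p) has_integral (C * (u powr (p+1) / (p+1)))) {0..u}"
    using has_integral_powr_from_0[OF assms(2,3)] by (rule has_integral_mult_right)
  from nn_integral_has_integral_lebesgue[OF _ this] show ?thesis
    using assms by simp
qed

lemma one_minus_exp_le: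
  fixes t \<theta> :: real
  assumes "t \<ge> 0" "0 < \<theta>" "\<theta> \<le> 1"
  shows "1 - exp (-t) \<le> t powr \<theta>"
proof (cases "t \<le> 1")
  case True
  have "1 - exp (-t) \<le> t" using exp_ge_add_one_self[of "-t"] by simp
  also have "t \<le> t powr \<theta>"
  proof (cases "t = 0")
    case False
    then have "t powr 1 \<le> t powr \<theta>" using True assms by (intro powr_mono') auto
    then show ?thesis using False assms by simp
  qed simp
  finally show ?thesis .
next
  case False
  then have "1 \<le> t powr \<theta>" using assms by (intro ge_one_powr_ge_zero) auto
  moreover have "1 - exp (-t) \<le> 1" by simp
  ultimately show ?thesis by linarith
qed




lemma nak_meas[measurable]: "nakagami_pdf m \<in> borel_measurable borel"
  unfolding nakagami_pdf_def by measurable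

context prob_space begin

lemma nak_cdf_emeasure:
  assumes D: "distributed M lborel X (\<lambda>x. ennreal (nakagami_pdf m x))"
  shows "emeasure M {\<omega>\<in>space M. X \<omega> \<le> u} = (\<integral>\<^sup>+x. ennreal (nakagami_pdf m x) * indicator {..u} x \<partial>lborel)"
proof -
  have Xm: "X \<in> measurable M lborel" using D by (rule distributed_measurable)
  have "{\<omega>\<in>space M. X \<omega> \<le> u} = X -` {..u} \<inter> space M" by auto
  then have "emeasure M {\<omega>\<in>space M. X \<omega> \<le> u} = emeasure (distr M lborel X) {..u}"
    using Xm by (simp add: emeasure_distr)
  also have "distr M lborel X = density lborel (\<lambda>x. ennreal (nakagami_pdf m x))"
    using D by (rule distributed_distr_eq_density)
  also have "emeasure (density lborel (\<lambda>x. ennreal (nakagami_pdf m x))) {..u} = (\<integral>\<^sup>+x. ennreal (nakagami_pdf m x) * indicator {..u} x \<partial>lborel)"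
    by (rule emeasure_density) (auto simp: nakagami_pdf_def)
  finally show ?thesis .
qed

lemma nak_cdf_bounds:
  assumes D: "distributed M lborel X (\<lambda>x. ennreal (nakagami_pdf m x))"
    and m: "m \<ge> 1/2" and u: "u \<ge> 0" and th: "0 < \<theta>" "\<theta> \<le> 1"
  shows "cdf_of M X u \<le> m powr (m-1) / Gamma m * u powr (2*m)"
    and "m powr (m-1) / Gamma m * u powr (2*m) \<le> cdf_of M X u
           + 2 * m powr m / Gamma m * m powr \<theta> / (2*m+2*\<theta>) * u powr (2*m+2*\<theta>)"
proof -
  define c where "c = 2 * m powr m / Gamma m"
  have mpos: "m > 0" using m by simp
  have Gpos: "Gamma m > 0" using mpos by (rule Gamma_real_pos)
  have cpos: "c > 0" unfolding c_def using Gpos mpos by simp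
  have kap: "c * (u powr (2*m-1+1) / (2*m-1+1)) = m powr (m-1) / Gamma m * u powr (2*m)"
    unfolding c_def using mpos by (simp add: powr_diff field_simps)
  have lam: "c * m powr \<theta> * (u powr (2*m-1+2*\<theta>+1) / (2*m-1+2*\<theta>+1)) =
      2 * m powr m / Gamma m * m powr \<theta> / (2*m+2*\<theta>) * u powr (2*m+2*\<theta>)"
    unfolding c_def by (simp add: field_simps)
  have E: "emeasure M {\<omega>\<in>space M. X \<omega> \<le> u} = ennreal (cdf_of M X u)"
    unfolding cdf_of_def by (simp add: emeasure_eq_measure)
  have f_eq: "nakagami_pdf m x = (if 0 \<le> x then c * x powr (2*m-1) * exp (- m * x\<^sup>2) else 0)" for x
    unfolding nakagami_pdf_def c_def by simp
  have "(\<integral>\<^sup>+x. ennreal (nakagami_pdf m x) * indicator {..u} x \<partial>lborel)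
      \<le> (\<integral>\<^sup>+x. ennreal (indicator {0..u} x * (c * x powr (2*m-1))) \<partial>lborel)"
  proof (intro nn_integral_mono)
    fix x :: real
    show "ennreal (nakagami_pdf m x) * indicator {..u} x \<le> ennreal (indicator {0..u} x * (c * x powr (2*m-1)))"
    proof (cases "0 \<le> x \<and> x \<le> u")
      case True
      have "c * x powr (2*m-1) * exp (- m * x\<^sup>2) \<le> c * x powr (2*m-1)"
        using cpos mpos by (intro mult_left_le) (auto intro!: mult_nonneg_nonneg)
      then show ?thesis using True by (simp add: f_eq indicator_def ennreal_leI)
    next
      case False
      then show ?thesis by (auto simp: f_eq indicator_def)
    qed
  qed
  also have "\<dots> = ennreal (c * (u powr (2*m-1+1) / (2*m-1+1)))"
    using cpos m u by (intro nn_int_powr) auto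
  finally have "ennreal (cdf_of M X u) \<le> ennreal (m powr (m-1) / Gamma m * u powr (2*m))"
    using nak_cdf_emeasure[OF D, of u] E kap by simp
  then show "cdf_of M X u \<le> m powr (m-1) / Gamma m * u powr (2*m)"
    using Gpos u by (subst (asm) ennreal_le_iff) auto
  have "ennreal (c * (u powr (2*m-1+1) / (2*m-1+1))) = (\<integral>\<^sup>+x. ennreal (indicator {0..u} x * (c * x powr (2*m-1))) \<partial>lborel)"
    using cpos m u by (intro nn_int_powr[symmetric]) auto
  also have "\<dots> \<le> (\<integral>\<^sup>+x. ennreal (nakagami_pdf m x) * indicator {..u} x +
        ennreal (indicator {0..u} x * ((c * m powr \<theta>) * x powr (2*m-1+2*\<theta>))) \<partial>lborel)"
  proof (intro nn_integral_mono)
    fix x :: real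
    show "ennreal (indicator {0..u} x * (c * x powr (2*m-1))) \<le> ennreal (nakagami_pdf m x) * indicator {..u} x +
        ennreal (indicator {0..u} x * ((c * m powr \<theta>) * x powr (2*m-1+2*\<theta>)))"
    proof (cases "0 \<le> x \<and> x \<le> u")
      case True
      have "1 - exp (- (m * x\<^sup>2)) \<le> (m * x\<^sup>2) powr \<theta>"
        using mpos th by (intro one_minus_exp_le) auto
      also have "(m * x\<^sup>2) powr \<theta> = m powr \<theta> * x powr (2*\<theta>)"
        using True mpos by (simp add: powr_mult powr_powr[symmetric] powr_numeral)
      finally have h1: "1 - exp (- (m * x\<^sup>2)) \<le> m powr \<theta> * x powr (2*\<theta>)" .
      have "c * x powr (2*m-1) * (1 - exp (- (m * x\<^sup>2))) \<le> c * x powr (2*m-1) * (m powr \<theta> * x powr (2*\<theta>))"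
        using cpos by (intro mult_left_mono h1) auto
      also have "\<dots> = (c * m powr \<theta>) * x powr (2*m-1+2*\<theta>)"
        by (simp add: powr_add)
      finally have h2: "c * x powr (2*m-1) \<le> c * x powr (2*m-1) * exp (- m * x\<^sup>2) + (c * m powr \<theta>) * x powr (2*m-1+2*\<theta>)"
        by (simp add: algebra_simps)
      have nn: "0 \<le> c * x powr (2*m-1) * exp (- m * x\<^sup>2)" "0 \<le> (c * m powr \<theta>) * x powr (2*m-1+2*\<theta>)"
        using cpos by auto
      show ?thesis using True h2 nn by (simp add: f_eq indicator_def ennreal_plus[symmetric] del: ennreal_plus)
    next
      case False
      then show ?thesis by (auto simp: f_eq indicator_def)
    qed
  qed
  also have "\<dots> = (\<integral>\<^sup>+x. ennreal (nakagami_pdf m x) * indicator {..u} x \<partial>lborel) +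
      (\<integral>\<^sup>+x. ennreal (indicator {0..u} x * ((c * m powr \<theta>) * x powr (2*m-1+2*\<theta>))) \<partial>lborel)"
    by (rule nn_integral_add) auto
  also have "(\<integral>\<^sup>+x. ennreal (indicator {0..u} x * ((c * m powr \<theta>) * x powr (2*m-1+2*\<theta>))) \<partial>lborel)
      = ennreal (c * m powr \<theta> * (u powr (2*m-1+2*\<theta>+1) / (2*m-1+2*\<theta>+1)))"
    using cpos m u th by (intro nn_int_powr) auto
  finally have "ennreal (m powr (m-1) / Gamma m * u powr (2*m)) \<le> ennreal (cdf_of M X u) +
      ennreal (2 * m powr m / Gamma m * m powr \<theta> / (2*m+2*\<theta>) * u powr (2*m+2*\<theta>))"
    using nak_cdf_emeasure[OF D, of u] E kap lam by simp
  also have "\<dots> = ennreal (cdf_of M X u + 2 * m powr m / Gamma m * m powr \<theta> / (2*m+2*\<theta>) * u powr (2*m+2*\<theta>))"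
    using Gpos th mpos by (intro ennreal_plus[symmetric]) (auto simp: cdf_of_def)
  finally show "m powr (m-1) / Gamma m * u powr (2*m) \<le> cdf_of M X u
           + 2 * m powr m / Gamma m * m powr \<theta> / (2*m+2*\<theta>) * u powr (2*m+2*\<theta>)"
    using Gpos th mpos by (subst (asm) ennreal_le_iff) (auto simp: cdf_of_def intro!: add_nonneg_nonneg)
qed

end



lemma lim_ind:
  fixes F :: "real \<Rightarrow> ennreal" and B :: "nat \<Rightarrow> real"
  assumes F: "F \<in> borel_measurable borel" and B: "mono B" "filterlim B at_top sequentially"
  shows "(\<lambda>n. \<integral>\<^sup>+x. F x * indicator {0..B n} x \<partial>lborel) \<longlonglongrightarrow> (\<integral>\<^sup>+x. F x * indicator {0..} x \<partial>lborel)"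
proof (rule nn_integral_LIMSEQ)
  show "incseq (\<lambda>n x. F x * indicator {0..B n} x)"
    unfolding incseq_def le_fun_def
  proof (intro allI impI)
    fix m n :: nat and x assume "m \<le> n"
    then have "B m \<le> B n" using B(1) by (simp add: monoD)
    then show "F x * indicator {0..B m} x \<le> F x * indicator {0..B n} x"
      by (intro mult_left_mono) (auto simp: indicator_def)
  qed
  show "\<And>i. (\<lambda>x. F x * indicator {0..B i} x) \<in> borel_measurable lborel" using F by measurable
  fix x :: real
  have "eventually (\<lambda>n. x \<le> B n) sequentially" using B(2) by (simp add: filterlim_at_top)
  then have "eventually (\<lambda>n. F x * indicator {0..B n} x = F x * indicator {0..} x) sequentially"
    by eventually_elim (auto simp: indicator_def)
  then show "(\<lambda>n. F x * indicator {0..B n} x) \<longlonglongrightarrow> F x * indicator {0..} x"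
    by (rule tendsto_eventually)
qed

lemma gamma_sq_integral:
  fixes m p :: real
  assumes m: "m > 0" and p: "p > 0"
  shows "(\<integral>\<^sup>+y. ennreal (2 * m powr p * y powr (2*p-1) * exp (- m * y\<^sup>2)) * indicator {0..} y \<partial>lborel)
          = ennreal (Gamma p)"
proof -
  define \<phi> where "\<phi> t = t powr (p - 1) / exp t" for t :: real
  define g where "g y = m * y\<^sup>2" for y :: real
  define h where "h y = 2 * m powr p * y powr (2*p-1) * exp (- m * y\<^sup>2)" for y :: real
  have sub: "(\<integral>\<^sup>+t. \<phi> t * indicator {g 0..g (real n)} t \<partial>lborel) =
             (\<integral>\<^sup>+y. \<phi> (g y) * (2 * m * y) * indicator {0..real n} y \<partial>lborel)" for n :: nat
  proof (rule nn_integral_substitution)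
    show "set_borel_measurable borel {g 0..g (real n)} \<phi>" unfolding \<phi>_def set_borel_measurable_def by measurable
    show "(g has_real_derivative 2 * m * x) (at x)" for x
      unfolding g_def by (auto intro!: derivative_eq_intros)
    show "continuous_on {0..real n} (\<lambda>x. 2 * m * x)" by (intro continuous_intros)
  qed (use m in auto)
  have eq1: "ennreal (\<phi> (g y) * (2 * m * y) * indicator {0..real n} y) = ennreal (h y) * indicator {0..real n} y" for y n
  proof (cases "y > 0")
    case True
    have "\<phi> (g y) * (2 * m * y) = (m * y\<^sup>2) powr (p-1) * (2 * m * y) / exp (m * y\<^sup>2)"
      unfolding \<phi>_def g_def by simp
    also have "(m * y\<^sup>2) powr (p-1) = m powr (p-1) * y powr (2*p-2)"
    proof -
      have "y\<^sup>2 = y powr 2" using True by (simp add: powr_numeral)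
      then have "(y\<^sup>2) powr (p-1) = y powr (2*p-2)" by (simp add: powr_powr algebra_simps)
      then show ?thesis using True m by (simp add: powr_mult)
    qed
    also have "m powr (p-1) * y powr (2*p-2) * (2 * m * y) / exp (m * y\<^sup>2) = h y"
    proof -
      have "m powr (p-1) * m = m powr p" using m by (simp add: powr_diff)
      moreover have "y powr (2*p-2) * y = y powr (2*p-1)"
      proof -
        have "y powr (2*p-1) = y powr (2*p-2 + 1)" by simp
        also have "\<dots> = y powr (2*p-2) * y powr 1" by (rule powr_add)
        finally have "y powr (2*p-1) = y powr (2*p-2) * y powr 1" .
        then show ?thesis using True by simp
      qed
      ultimately have "m powr (p-1) * y powr (2*p-2) * (2 * m * y) = 2 * m powr p * y powr (2*p-1)"
        by (metis (no_types, lifting) mult.assoc mult.commute mult.left_commute)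
      then show ?thesis unfolding h_def by (simp add: exp_minus field_simps)
    qed
    finally show ?thesis by (simp add: indicator_def)
  next
    case False
    then show ?thesis unfolding \<phi>_def g_def h_def by (cases "y = 0") (auto simp: indicator_def)
  qed
  have L1: "(\<lambda>n. \<integral>\<^sup>+t. ennreal (\<phi> t) * indicator {0..m * (real n)\<^sup>2} t \<partial>lborel) \<longlonglongrightarrow>
      (\<integral>\<^sup>+t. ennreal (\<phi> t) * indicator {0..} t \<partial>lborel)"
  proof (rule lim_ind)
    show "(\<lambda>t. ennreal (\<phi> t)) \<in> borel_measurable borel" unfolding \<phi>_def by measurable
    show "mono (\<lambda>n. m * (real n)\<^sup>2)" using m by (auto intro!: monoI mult_left_mono power_mono)
    show "filterlim (\<lambda>n. m * (real n)\<^sup>2) at_top sequentially" using m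
      by (intro filterlim_tendsto_pos_mult_at_top[OF tendsto_const m] filterlim_pow_at_top filterlim_real_sequentially) auto
  qed
  have L2: "(\<lambda>n. \<integral>\<^sup>+y. ennreal (h y) * indicator {0..real n} y \<partial>lborel) \<longlonglongrightarrow>
      (\<integral>\<^sup>+y. ennreal (h y) * indicator {0..} y \<partial>lborel)"
  proof (rule lim_ind)
    show "(\<lambda>t. ennreal (h t)) \<in> borel_measurable borel" unfolding h_def by measurable
    show "mono (\<lambda>n. real n)" by (auto intro!: monoI)
    show "filterlim (\<lambda>n. real n) at_top sequentially" by (rule filterlim_real_sequentially)
  qed
  have same: "(\<integral>\<^sup>+t. ennreal (\<phi> t) * indicator {0..m * (real n)\<^sup>2} t \<partial>lborel) =
              (\<integral>\<^sup>+y. ennreal (h y) * indicator {0..real n} y \<partial>lborel)" for n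
  proof -
    have "(\<integral>\<^sup>+t. ennreal (\<phi> t) * indicator {0..m * (real n)\<^sup>2} t \<partial>lborel) =
          (\<integral>\<^sup>+t. \<phi> t * indicator {g 0..g (real n)} t \<partial>lborel)"
      unfolding g_def by (intro nn_integral_cong) (auto simp: indicator_def)
    also have "\<dots> = (\<integral>\<^sup>+y. \<phi> (g y) * (2 * m * y) * indicator {0..real n} y \<partial>lborel)" by (rule sub)
    also have "\<dots> = (\<integral>\<^sup>+y. ennreal (h y) * indicator {0..real n} y \<partial>lborel)"
      by (intro nn_integral_cong) (simp add: eq1[symmetric])
    finally show ?thesis .
  qed
  have "(\<integral>\<^sup>+y. ennreal (h y) * indicator {0..} y \<partial>lborel) = (\<integral>\<^sup>+t. ennreal (\<phi> t) * indicator {0..} t \<partial>lborel)"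
    using LIMSEQ_unique[OF L2 L1[unfolded same]] by simp
  also have "\<dots> = (\<integral>\<^sup>+t. ennreal (indicator {0..} t * \<phi> t) \<partial>lborel)"
    by (intro nn_integral_cong) (auto simp: indicator_def)
  also have "\<dots> = ennreal (Gamma p)"
    using Gamma_integral_real[OF p] unfolding \<phi>_def
    by (intro nn_integral_has_integral_lebesgue) auto
  finally show ?thesis unfolding h_def .
qed




context prob_space begin

lemma nak_negmom:
  assumes D: "distributed M lborel X (\<lambda>x. ennreal (nakagami_pdf m x))"
    and m: "m > 0" and r: "0 \<le> r" "r < m"
  shows "(\<integral>\<^sup>+\<omega>. ennreal (X \<omega> powr (-2*r)) \<partial>M) = ennreal (m powr r * Gamma (m - r) / Gamma m)"
proof -
  define p where "p = m - r"
  have p: "p > 0" using r unfolding p_def by simp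
  define K where "K = m powr m / Gamma m / m powr p"
  have Kpos: "K > 0" unfolding K_def using m Gamma_real_pos[OF m] by simp
  have "(\<integral>\<^sup>+\<omega>. ennreal (X \<omega> powr (-2*r)) \<partial>M) = (\<integral>\<^sup>+x. ennreal (nakagami_pdf m x) * ennreal (x powr (-2*r)) \<partial>lborel)"
    by (rule distributed_nn_integral[OF D, symmetric]) measurable
  also have "\<dots> = (\<integral>\<^sup>+x. ennreal K * (ennreal (2 * m powr p * x powr (2*p-1) * exp (- m * x\<^sup>2)) * indicator {0..} x) \<partial>lborel)"
  proof (intro nn_integral_cong)
    fix x :: real
    show "ennreal (nakagami_pdf m x) * ennreal (x powr (-2*r)) =
       ennreal K * (ennreal (2 * m powr p * x powr (2*p-1) * exp (- m * x\<^sup>2)) * indicator {0..} x)"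
    proof (cases "x > 0")
      case True
      have "x powr (2*m-1) * x powr (-2*r) = x powr (2*p-1)"
        unfolding p_def by (simp add: powr_add[symmetric] algebra_simps)
      have Kp: "K * (2 * m powr p) = 2 * m powr m / Gamma m"
        unfolding K_def using m by simp
      have "nakagami_pdf m x * x powr (-2*r) = (2 * m powr m / Gamma m) * (x powr (2*m-1) * x powr (-2*r)) * exp (- m * x\<^sup>2)"
        using True unfolding nakagami_pdf_def by (simp only: if_True mult_ac less_imp_le)
      also have "\<dots> = (K * (2 * m powr p)) * x powr (2*p-1) * exp (- m * x\<^sup>2)"
        by (simp only: Kp \<open>x powr (2*m-1) * x powr (-2*r) = x powr (2*p-1)\<close>)
      finally have "nakagami_pdf m x * x powr (-2*r) = K * (2 * m powr p * x powr (2*p-1) * exp (- m * x\<^sup>2))"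
        by (simp only: mult_ac)
      moreover have "0 \<le> nakagami_pdf m x" using m Gamma_real_pos[OF m] by (simp add: nakagami_pdf_def)
      ultimately show ?thesis using True Kpos
        by (simp add: ennreal_mult'[symmetric] ennreal_mult[symmetric] indicator_def)
    next
      case False
      then show ?thesis by (cases "x = 0") (auto simp: nakagami_pdf_def indicator_def)
    qed
  qed
  also have "\<dots> = ennreal K * (\<integral>\<^sup>+x. ennreal (2 * m powr p * x powr (2*p-1) * exp (- m * x\<^sup>2)) * indicator {0..} x \<partial>lborel)"
    by (rule nn_integral_cmult) measurable
  also have "\<dots> = ennreal K * ennreal (Gamma p)"
    using gamma_sq_integral[OF m p] by simp
  also have "\<dots> = ennreal (m powr r * Gamma (m - r) / Gamma m)"
  proof -
    have "K * Gamma p = m powr r * Gamma (m - r) / Gamma m"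
      unfolding K_def p_def using m by (simp add: powr_diff field_simps)
    then show ?thesis using Kpos Gamma_real_pos[OF p] by (subst ennreal_mult[symmetric]) auto
  qed
  finally show ?thesis .
qed

lemma indep_prob_formula:
  fixes X Y :: "'a \<Rightarrow> real"
  assumes ind: "indep_var borel X borel Y"
    and P: "Measurable.pred (borel \<Otimes>\<^sub>M borel) (\<lambda>(x,y). P x y)"
    and P2: "\<And>y. Measurable.pred borel (\<lambda>x. P x y)"
  shows "emeasure M {\<omega>\<in>space M. P (X \<omega>) (Y \<omega>)} = (\<integral>\<^sup>+y. emeasure M {\<omega>\<in>space M. P (X \<omega>) y} \<partial>distr M borel Y)"
proof -
  have rv: "random_variable borel X" "random_variable borel Y"
    and eq: "distr M borel X \<Otimes>\<^sub>M distr M borel Y = distr M (borel \<Otimes>\<^sub>M borel) (\<lambda>x. (X x, Y x))"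
    using ind unfolding indep_var_distribution_eq by auto
  interpret PX: prob_space "distr M borel X" by (rule prob_space_distr) fact
  interpret PY: prob_space "distr M borel Y" by (rule prob_space_distr) fact
  interpret PXY: pair_sigma_finite "distr M borel X" "distr M borel Y" ..
  define S where "S = {xy \<in> space (borel \<Otimes>\<^sub>M borel). P (fst xy) (snd xy)}"
  have S: "S \<in> sets (borel \<Otimes>\<^sub>M borel)"
  proof -
    have "S = {xy \<in> space (borel \<Otimes>\<^sub>M borel). (\<lambda>(x,y). P x y) xy}"
      unfolding S_def by (auto simp: split_beta)
    then show ?thesis using P unfolding pred_def by simp
  qed
  have "{\<omega>\<in>space M. P (X \<omega>) (Y \<omega>)} = (\<lambda>x. (X x, Y x)) -` S \<inter> space M"
    unfolding S_def by (auto simp: space_pair_measure)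
  moreover have "(\<lambda>x. (X x, Y x)) \<in> measurable M (borel \<Otimes>\<^sub>M borel)"
    using rv by (rule measurable_Pair)
  ultimately have "emeasure M {\<omega>\<in>space M. P (X \<omega>) (Y \<omega>)} = emeasure (distr M (borel \<Otimes>\<^sub>M borel) (\<lambda>x. (X x, Y x))) S"
    using S by (simp only: emeasure_distr)
  also have "\<dots> = emeasure (distr M borel X \<Otimes>\<^sub>M distr M borel Y) S" by (simp only: eq)
  also have "\<dots> = (\<integral>\<^sup>+y. emeasure (distr M borel X) ((\<lambda>x. (x, y)) -` S) \<partial>distr M borel Y)"
  proof (rule PXY.emeasure_pair_measure_alt2)
    have "sets (distr M borel X \<Otimes>\<^sub>M distr M borel Y) = sets (borel \<Otimes>\<^sub>M borel)"
      by (intro sets_pair_measure_cong) auto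
    then show "S \<in> sets (distr M borel X \<Otimes>\<^sub>M distr M borel Y)" using S by simp
  qed
  also have "\<dots> = (\<integral>\<^sup>+y. emeasure M {\<omega>\<in>space M. P (X \<omega>) y} \<partial>distr M borel Y)"
  proof (intro nn_integral_cong)
    fix y
    have "(\<lambda>x. (x, y)) -` S = {x. P x y}" unfolding S_def by (auto simp: space_pair_measure)
    moreover have "{x. P x y} \<in> sets borel" using P2[of y] by (simp add: pred_def)
    moreover have "X -` {x. P x y} \<inter> space M = {\<omega>\<in>space M. P (X \<omega>) y}" by auto
    ultimately show "emeasure (distr M borel X) ((\<lambda>x. (x, y)) -` S) = emeasure M {\<omega>\<in>space M. P (X \<omega>) y}"
      using rv by (metis emeasure_distr sets_borel)
  qed
  finally show ?thesis .
qed
end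



lemma distr_lborel_borel: "distr M lborel X = distr M borel X"
  unfolding distr_def by simp

context prob_space begin

lemma emeasure_section_meas:
  fixes X :: "'a \<Rightarrow> real"
  assumes X: "random_variable borel X" and P: "Measurable.pred (borel \<Otimes>\<^sub>M borel) (\<lambda>(x,y). P x y)"
  shows "(\<lambda>y. emeasure M {\<omega>\<in>space M. P (X \<omega>) y}) \<in> borel_measurable borel"
proof -
  define Q where "Q = {yw \<in> space (borel \<Otimes>\<^sub>M M). P (X (snd yw)) (fst yw)}"
  have "(\<lambda>yw. (X (snd yw), fst yw)) \<in> measurable (borel \<Otimes>\<^sub>M M) (borel \<Otimes>\<^sub>M borel)"
    using X by measurable
  from measurable_compose[OF this P] have "Measurable.pred (borel \<Otimes>\<^sub>M M) (\<lambda>yw. P (X (snd yw)) (fst yw))"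
    by (simp add: split_beta)
  then have Q: "Q \<in> sets (borel \<Otimes>\<^sub>M M)" unfolding Q_def pred_def by simp
  have "Pair y -` Q = {\<omega>\<in>space M. P (X \<omega>) y}" for y unfolding Q_def by (auto simp: space_pair_measure)
  with measurable_emeasure_Pair[OF Q] show ?thesis by simp
qed

lemma nak_AE_pos:
  assumes D: "distributed M lborel Y (\<lambda>x. ennreal (nakagami_pdf m x))"
  shows "AE y in distr M borel Y. 0 < y"
proof -
  have "distr M borel Y = density lborel (\<lambda>x. ennreal (nakagami_pdf m x))"
    using distributed_distr_eq_density[OF D] by (simp add: distr_lborel_borel)
  moreover have "AE y in density lborel (\<lambda>x. ennreal (nakagami_pdf m x)). 0 < y"
  proof (subst AE_density)
    show "(\<lambda>x. ennreal (nakagami_pdf m x)) \<in> borel_measurable lborel" by measurable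
    show "AE x in lborel. 0 < ennreal (nakagami_pdf m x) \<longrightarrow> 0 < x"
    proof (intro AE_I2 impI)
      fix x :: real assume "0 < ennreal (nakagami_pdf m x)"
      then have "nakagami_pdf m x \<noteq> 0" by auto
      then show "0 < x" unfolding nakagami_pdf_def by (cases "x = 0") (auto split: if_splits)
    qed
  qed
  ultimately show ?thesis by (simp only:)
qed

lemma prod_bounds:
  fixes X Y :: "'a \<Rightarrow> real"
  assumes DX: "distributed M lborel X (\<lambda>x. ennreal (nakagami_pdf m1 x))"
    and DY: "distributed M lborel Y (\<lambda>x. ennreal (nakagami_pdf m2 x))"
    and ind: "indep_var borel X borel Y"
    and m1: "m1 \<ge> 1/2" "m1 < m2" and th: "0 < \<theta>" "\<theta> \<le> 1" "m1 + \<theta> < m2" and z: "z \<ge> 0"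
  defines "A \<equiv> m1 powr (m1-1) / Gamma m1 * (m2 powr m1 * Gamma (m2 - m1) / Gamma m2)"
    and "B \<equiv> (2 * m1 powr m1 / Gamma m1 * m1 powr \<theta> / (2*m1+2*\<theta>)) * (m2 powr (m1+\<theta>) * Gamma (m2 - (m1+\<theta>)) / Gamma m2)"
  shows "cdf_of M (\<lambda>\<omega>. X \<omega> * Y \<omega>) z \<le> A * z powr (2*m1)"
    and "A * z powr (2*m1) \<le> cdf_of M (\<lambda>\<omega>. X \<omega> * Y \<omega>) z + B * z powr (2*m1+2*\<theta>)"
proof -
  define \<kappa> where "\<kappa> = m1 powr (m1-1) / Gamma m1"
  define lam where "lam = 2 * m1 powr m1 / Gamma m1 * m1 powr \<theta> / (2*m1+2*\<theta>)"
  define E1 where "E1 = m2 powr m1 * Gamma (m2 - m1) / Gamma m2"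
  define E2 where "E2 = m2 powr (m1+\<theta>) * Gamma (m2 - (m1+\<theta>)) / Gamma m2"
  have m1pos: "m1 > 0" "m2 > 0" using m1 by auto
  have G1: "Gamma m1 > 0" "Gamma m2 > 0" using m1pos by (auto intro: Gamma_real_pos)
  have nn: "\<kappa> \<ge> 0" "lam \<ge> 0" "E1 \<ge> 0" "E2 \<ge> 0"
    unfolding \<kappa>_def lam_def E1_def E2_def using G1 m1pos th m1
    by (auto intro!: divide_nonneg_pos mult_nonneg_nonneg Gamma_real_pos less_imp_le)
  have Ym: "random_variable borel Y" using ind by (rule indep_var_rv2)
  have Xm: "random_variable borel X" using ind by (rule indep_var_rv1)
  have form: "emeasure M {\<omega>\<in>space M. X \<omega> * Y \<omega> \<le> z} = (\<integral>\<^sup>+y. emeasure M {\<omega>\<in>space M. X \<omega> * y \<le> z} \<partial>distr M borel Y)"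
    by (rule indep_prob_formula[OF ind, where P="\<lambda>x y. x * y \<le> z"]) measurable
  have sec: "emeasure M {\<omega>\<in>space M. X \<omega> * y \<le> z} = ennreal (cdf_of M X (z / y))" if "y > 0" for y
  proof -
    have "{\<omega>\<in>space M. X \<omega> * y \<le> z} = {\<omega>\<in>space M. X \<omega> \<le> z / y}"
      using that by (auto simp: field_simps)
    then show ?thesis unfolding cdf_of_def by (simp add: emeasure_eq_measure)
  qed
  have zy: "(z / y) powr a = z powr a * y powr (-a)" if "y > 0" for y a :: real
    using that z by (simp add: powr_divide powr_minus_divide)
  have EM1: "(\<integral>\<^sup>+y. ennreal (y powr (-2*m1)) \<partial>distr M borel Y) = ennreal E1"
  proof -
    have "(\<integral>\<^sup>+y. ennreal (y powr (-2*m1)) \<partial>distr M borel Y) = (\<integral>\<^sup>+\<omega>. ennreal (Y \<omega> powr (-2*m1)) \<partial>M)"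
      using Ym by (intro nn_integral_distr) auto
    also have "\<dots> = ennreal E1" unfolding E1_def using m1 by (intro nak_negmom[OF DY]) auto
    finally show ?thesis .
  qed
  have EM2: "(\<integral>\<^sup>+y. ennreal (y powr (-2*(m1+\<theta>))) \<partial>distr M borel Y) = ennreal E2"
  proof -
    have "(\<integral>\<^sup>+y. ennreal (y powr (-2*(m1+\<theta>))) \<partial>distr M borel Y) = (\<integral>\<^sup>+\<omega>. ennreal (Y \<omega> powr (-2*(m1+\<theta>))) \<partial>M)"
      using Ym by (intro nn_integral_distr) auto
    also have "\<dots> = ennreal E2" unfolding E2_def using m1 th by (intro nak_negmom[OF DY]) auto
    finally show ?thesis .
  qed
  have E: "emeasure M {\<omega>\<in>space M. X \<omega> * Y \<omega> \<le> z} = ennreal (cdf_of M (\<lambda>\<omega>. X \<omega> * Y \<omega>) z)"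
    unfolding cdf_of_def by (simp add: emeasure_eq_measure)
  have AEpos: "AE y in distr M borel Y. 0 < y" by (rule nak_AE_pos[OF DY])
  have "(\<integral>\<^sup>+y. emeasure M {\<omega>\<in>space M. X \<omega> * y \<le> z} \<partial>distr M borel Y)
      \<le> (\<integral>\<^sup>+y. ennreal (\<kappa> * z powr (2*m1)) * ennreal (y powr (-2*m1)) \<partial>distr M borel Y)"
  proof (rule nn_integral_mono_AE)
    show "AE y in distr M borel Y. emeasure M {\<omega>\<in>space M. X \<omega> * y \<le> z} \<le> ennreal (\<kappa> * z powr (2*m1)) * ennreal (y powr (-2*m1))"
      using AEpos
    proof eventually_elim
      case (elim y)
      have "cdf_of M X (z/y) \<le> \<kappa> * (z/y) powr (2*m1)"
        unfolding \<kappa>_def using z elim m1 by (intro nak_cdf_bounds(1)[OF DX, where \<theta>=1]) auto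
      also have "\<dots> = (\<kappa> * z powr (2*m1)) * y powr (-2*m1)" using zy[OF elim] by simp
      finally show ?case using sec[OF elim] nn z
        by (simp add: ennreal_mult[symmetric] ennreal_leI)
    qed
  qed
  also have "\<dots> = ennreal (\<kappa> * z powr (2*m1)) * ennreal E1"
    by (subst nn_integral_cmult) (simp_all add: EM1[simplified])
  also have "\<dots> = ennreal ((\<kappa> * z powr (2*m1)) * E1)"
    using nn z by (intro ennreal_mult[symmetric]) auto
  also have "(\<kappa> * z powr (2*m1)) * E1 = A * z powr (2*m1)"
    unfolding A_def \<kappa>_def E1_def by (simp add: mult_ac)
  finally have "ennreal (cdf_of M (\<lambda>\<omega>. X \<omega> * Y \<omega>) z) \<le> ennreal (A * z powr (2*m1))"
    using form E by simp
  moreover have A0: "0 \<le> A * z powr (2*m1)" unfolding A_def using nn(1,3) unfolding \<kappa>_def E1_def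
    by (intro mult_nonneg_nonneg) auto
  ultimately show "cdf_of M (\<lambda>\<omega>. X \<omega> * Y \<omega>) z \<le> A * z powr (2*m1)"
    by (subst (asm) ennreal_le_iff) auto
  have "ennreal (A * z powr (2*m1)) = ennreal ((\<kappa> * z powr (2*m1)) * E1)"
    unfolding A_def \<kappa>_def E1_def by (simp add: mult_ac)
  also have "\<dots> = ennreal (\<kappa> * z powr (2*m1)) * ennreal E1"
    using nn z by (intro ennreal_mult) auto
  also have "\<dots> = (\<integral>\<^sup>+y. ennreal (\<kappa> * z powr (2*m1)) * ennreal (y powr (-2*m1)) \<partial>distr M borel Y)"
    by (subst nn_integral_cmult) (simp_all add: EM1[simplified])
  also have "\<dots> \<le> (\<integral>\<^sup>+y. emeasure M {\<omega>\<in>space M. X \<omega> * y \<le> z} +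
        ennreal (lam * z powr (2*m1+2*\<theta>)) * ennreal (y powr (-2*(m1+\<theta>))) \<partial>distr M borel Y)"
  proof (rule nn_integral_mono_AE)
    show "AE y in distr M borel Y. ennreal (\<kappa> * z powr (2*m1)) * ennreal (y powr (-2*m1)) \<le>
        emeasure M {\<omega>\<in>space M. X \<omega> * y \<le> z} + ennreal (lam * z powr (2*m1+2*\<theta>)) * ennreal (y powr (-2*(m1+\<theta>)))"
      using AEpos
    proof eventually_elim
      case (elim y)
      have "\<kappa> * (z/y) powr (2*m1) \<le> cdf_of M X (z/y) + lam * (z/y) powr (2*m1+2*\<theta>)"
        unfolding \<kappa>_def lam_def using z elim m1 th by (intro nak_cdf_bounds(2)[OF DX]) auto
      moreover have "\<kappa> * (z/y) powr (2*m1) = (\<kappa> * z powr (2*m1)) * y powr (-2*m1)" using zy[OF elim] by simp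
      moreover have "lam * (z/y) powr (2*m1+2*\<theta>) = (lam * z powr (2*m1+2*\<theta>)) * y powr (-2*(m1+\<theta>))"
        using zy[OF elim, of "2*m1+2*\<theta>"] by (simp add: algebra_simps)
      ultimately have r: "(\<kappa> * z powr (2*m1)) * y powr (-2*m1) \<le> cdf_of M X (z/y) + (lam * z powr (2*m1+2*\<theta>)) * y powr (-2*(m1+\<theta>))"
        by simp
      have "ennreal ((\<kappa> * z powr (2*m1)) * y powr (-2*m1)) \<le> ennreal (cdf_of M X (z/y) + (lam * z powr (2*m1+2*\<theta>)) * y powr (-2*(m1+\<theta>)))"
        using r by (rule ennreal_leI)
      also have "\<dots> = ennreal (cdf_of M X (z/y)) + ennreal ((lam * z powr (2*m1+2*\<theta>)) * y powr (-2*(m1+\<theta>)))"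
        using nn z by (intro ennreal_plus) (auto simp: cdf_of_def)
      finally show ?case using sec[OF elim] nn z by (simp add: ennreal_mult[symmetric])
    qed
  qed
  also have "\<dots> = (\<integral>\<^sup>+y. emeasure M {\<omega>\<in>space M. X \<omega> * y \<le> z} \<partial>distr M borel Y) +
        (\<integral>\<^sup>+y. ennreal (lam * z powr (2*m1+2*\<theta>)) * ennreal (y powr (-2*(m1+\<theta>))) \<partial>distr M borel Y)"
  proof (rule nn_integral_add)
    show "(\<lambda>y. emeasure M {\<omega>\<in>space M. X \<omega> * y \<le> z}) \<in> borel_measurable (distr M borel Y)"
      using emeasure_section_meas[OF Xm, of "\<lambda>x y. x * y \<le> z"] by simp
  qed auto
  also have "\<dots> = ennreal (cdf_of M (\<lambda>\<omega>. X \<omega> * Y \<omega>) z) + ennreal (B * z powr (2*m1+2*\<theta>))"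
  proof -
    have "(\<integral>\<^sup>+y. ennreal (lam * z powr (2*m1+2*\<theta>)) * ennreal (y powr (-2*(m1+\<theta>))) \<partial>distr M borel Y)
       = ennreal (lam * z powr (2*m1+2*\<theta>)) * ennreal E2"
      by (subst nn_integral_cmult) (simp_all add: EM2[simplified])
    also have "\<dots> = ennreal ((lam * z powr (2*m1+2*\<theta>)) * E2)"
      using nn z by (intro ennreal_mult[symmetric]) auto
    also have "(lam * z powr (2*m1+2*\<theta>)) * E2 = B * z powr (2*m1+2*\<theta>)"
      unfolding B_def lam_def E2_def by (simp add: mult_ac)
    finally show ?thesis using form E by simp
  qed
  also have "\<dots> = ennreal (cdf_of M (\<lambda>\<omega>. X \<omega> * Y \<omega>) z + B * z powr (2*m1+2*\<theta>))"
    using nn unfolding B_def lam_def[symmetric] E2_def[symmetric]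
    by (intro ennreal_plus[symmetric]) (auto simp: cdf_of_def)
  finally show "A * z powr (2*m1) \<le> cdf_of M (\<lambda>\<omega>. X \<omega> * Y \<omega>) z + B * z powr (2*m1+2*\<theta>)"
    using nn unfolding B_def lam_def[symmetric] E2_def[symmetric]
    by (subst (asm) ennreal_le_iff) (auto simp: cdf_of_def)
qed

end



lemma hi_beta0:
  fixes a b y :: real
  assumes "a \<ge> 1" "b > 0" "y \<ge> 0"
  shows "((\<lambda>s. a * (y - s) powr (a - 1) * s powr b) has_integral
            (Gamma (a+1) * Gamma (b+1) / Gamma (a+b+1) * y powr (a+b))) {0..y}"
proof (cases "y = 0")
  case True
  then show ?thesis using has_integral_refl(2)[of "\<lambda>s. a * (y - s) powr (a - 1) * s powr b" 0] by simp
next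
  case False
  then show ?thesis using hi_beta[of a b y] assms by simp
qed

context prob_space begin

lemma layer_cake:
  fixes Y :: "'a \<Rightarrow> real"
  assumes Ym: "random_variable borel Y" and a: "a \<ge> 1"
  shows "(\<integral>\<^sup>+t. ennreal ((max 0 (y - t)) powr a) \<partial>distr M borel Y) =
         (\<integral>\<^sup>+s. ennreal (indicator {..y} s * (a * (y - s) powr (a-1))) * emeasure M {\<omega>\<in>space M. Y \<omega> \<le> s} \<partial>lborel)"
proof -
  define g where "g s = ennreal (indicator {..y} s * (a * (y - s) powr (a-1)))" for s
  have gm[measurable]: "g \<in> borel_measurable borel" unfolding g_def by measurable
  interpret PY: prob_space "distr M borel Y" by (rule prob_space_distr) fact
  interpret PP: pair_sigma_finite "distr M borel Y" lborel ..
  have inner: "ennreal ((max 0 (y - t)) powr a) = (\<integral>\<^sup>+s. g s * indicator {t..} s \<partial>lborel)" for t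
  proof (cases "t \<le> y")
    case True
    have "(\<integral>\<^sup>+s. g s * indicator {t..} s \<partial>lborel) = (\<integral>\<^sup>+s. ennreal (indicator {t..y} s * (a * (y - s) powr (a-1))) \<partial>lborel)"
      unfolding g_def by (intro nn_integral_cong) (auto simp: indicator_def)
    also have "\<dots> = ennreal ((y - t) powr a)"
      using hi_pow_shift[OF a True] a by (intro nn_integral_has_integral_lebesgue) auto
    finally show ?thesis using True by simp
  next
    case False
    have z: "(\<lambda>s. g s * indicator {t..} s) = (\<lambda>s. 0)"
      unfolding g_def using False by (auto simp: indicator_def fun_eq_iff)
    have "(\<integral>\<^sup>+s. g s * indicator {t..} s \<partial>lborel) = 0" by (subst z) simp
    then show ?thesis using False by simp
  qed
  have "(\<integral>\<^sup>+t. ennreal ((max 0 (y - t)) powr a) \<partial>distr M borel Y) =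
        (\<integral>\<^sup>+t. (\<integral>\<^sup>+s. g s * indicator {t..} s \<partial>lborel) \<partial>distr M borel Y)"
    by (simp add: inner)
  also have "\<dots> = (\<integral>\<^sup>+s. (\<integral>\<^sup>+t. g s * indicator {t..} s \<partial>distr M borel Y) \<partial>lborel)"
  proof (rule PP.Fubini'[symmetric])
    have "(\<lambda>(t, s). g s * indicator {t..} s) = (\<lambda>ts. g (snd ts) * (if fst ts \<le> snd ts then 1 else 0))"
      by (auto simp: indicator_def fun_eq_iff)
    moreover have "(\<lambda>ts::real\<times>real. g (snd ts) * (if fst ts \<le> snd ts then 1 else (0::ennreal))) \<in> borel_measurable (distr M borel Y \<Otimes>\<^sub>M lborel)"
      by measurable
    ultimately show "(\<lambda>(t, s). g s * indicator {t..} s) \<in> borel_measurable (distr M borel Y \<Otimes>\<^sub>M lborel)" by simp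
  qed
  also have "\<dots> = (\<integral>\<^sup>+s. g s * emeasure M {\<omega>\<in>space M. Y \<omega> \<le> s} \<partial>lborel)"
  proof (intro nn_integral_cong)
    fix s :: real
    have "(\<integral>\<^sup>+t. g s * indicator {t..} s \<partial>distr M borel Y) = g s * (\<integral>\<^sup>+t. indicator {..s} t \<partial>distr M borel Y)"
      by (subst nn_integral_cmult[symmetric]) (auto intro!: nn_integral_cong simp: indicator_def)
    also have "(\<integral>\<^sup>+t. indicator {..s} t \<partial>distr M borel Y) = emeasure (distr M borel Y) {..s}"
      by simp
    also have "\<dots> = emeasure M {\<omega>\<in>space M. Y \<omega> \<le> s}"
      using Ym by (subst emeasure_distr) (auto intro!: arg_cong[where f="emeasure M"])
    finally show "(\<integral>\<^sup>+t. g s * indicator {t..} s \<partial>distr M borel Y) = g s * emeasure M {\<omega>\<in>space M. Y \<omega> \<le> s}" .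
  qed
  finally show ?thesis unfolding g_def .
qed

end



context prob_space begin

lemma cdf_mono: "u \<le> v \<Longrightarrow> random_variable borel X \<Longrightarrow> cdf_of M X u \<le> cdf_of M X v"
  unfolding cdf_of_def by (intro finite_measure_mono) auto

lemma cdf_nonneg: "0 \<le> cdf_of M X u"
  unfolding cdf_of_def by simp

lemma cdf_neg_zero:
  assumes X: "random_variable borel X" and F0: "cdf_of M X 0 \<le> 0" and u: "u \<le> 0"
  shows "cdf_of M X u = 0"
  using cdf_mono[OF u X] F0 cdf_nonneg[of X u] by simp

lemma AE_nonneg_of_cdf:
  assumes X: "random_variable borel X" and F0: "cdf_of M X 0 \<le> 0"
  shows "AE t in distr M borel X. 0 \<le> t"
proof -
  have "AE \<omega> in M. 0 \<le> X \<omega>"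
  proof (rule AE_I[where N="{\<omega>\<in>space M. X \<omega> \<le> 0}"])
    show "{\<omega> \<in> space M. \<not> 0 \<le> X \<omega>} \<subseteq> {\<omega>\<in>space M. X \<omega> \<le> 0}" by auto
    show "emeasure M {\<omega>\<in>space M. X \<omega> \<le> 0} = 0"
      using F0 cdf_nonneg[of X 0] unfolding cdf_of_def by (simp add: emeasure_eq_measure)
    show "{\<omega>\<in>space M. X \<omega> \<le> 0} \<in> events" using X by measurable
  qed
  then show ?thesis using X by (subst AE_distr_iff) auto
qed

lemma conv_bounds:
  fixes X Y :: "'a \<Rightarrow> real"
  assumes ind: "indep_var borel X borel Y"
    and a: "a \<ge> 1" and b: "b \<ge> 1" and eta: "\<eta> > 0"
    and ABCD: "A \<ge> 0" "B \<ge> 0" "C \<ge> 0" "D \<ge> 0"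
    and FX: "\<And>u. 0 \<le> u \<Longrightarrow> u \<le> 1 \<Longrightarrow> cdf_of M X u \<le> A * u powr a \<and> A * u powr a \<le> cdf_of M X u + B * u powr (a+\<eta>)"
    and FY: "\<And>u. 0 \<le> u \<Longrightarrow> u \<le> 1 \<Longrightarrow> cdf_of M Y u \<le> C * u powr b \<and> C * u powr b \<le> cdf_of M Y u + D * u powr (b+\<eta>)"
    and y: "0 \<le> y" "y \<le> 1"
  defines "\<beta> \<equiv> Gamma (a+1) * Gamma (b+1) / Gamma (a+b+1)"
  shows "cdf_of M (\<lambda>\<omega>. X \<omega> + Y \<omega>) y \<le> A * C * \<beta> * y powr (a+b)"
    and "A * C * \<beta> * y powr (a+b) \<le> cdf_of M (\<lambda>\<omega>. X \<omega> + Y \<omega>) y + (B * C + A * D * \<beta>) * y powr (a+b+\<eta>)"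
proof -
  have Xm: "random_variable borel X" using ind by (rule indep_var_rv1)
  have Ym: "random_variable borel Y" using ind by (rule indep_var_rv2)
  have bpos: "\<beta> \<ge> 0" unfolding \<beta>_def using a b by (auto intro!: divide_nonneg_pos mult_nonneg_nonneg Gamma_real_pos less_imp_le)
  have FX0: "cdf_of M X u = 0" if "u \<le> 0" for u
    using FX[of 0] a by (intro cdf_neg_zero[OF Xm _ that]) auto
  have FY0: "cdf_of M Y u = 0" if "u \<le> 0" for u
    using FY[of 0] b by (intro cdf_neg_zero[OF Ym _ that]) auto
  have AEY: "AE t in distr M borel Y. 0 \<le> t" using FY0[of 0] by (intro AE_nonneg_of_cdf[OF Ym]) auto
  have emX: "emeasure M {\<omega>\<in>space M. X \<omega> + t \<le> y} = ennreal (cdf_of M X (y - t))" for t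
  proof -
    have "{\<omega>\<in>space M. X \<omega> + t \<le> y} = {\<omega>\<in>space M. X \<omega> \<le> y - t}" by auto
    then show ?thesis unfolding cdf_of_def by (simp add: emeasure_eq_measure)
  qed
  have emY: "emeasure M {\<omega>\<in>space M. Y \<omega> \<le> s} = ennreal (cdf_of M Y s)" for s
    unfolding cdf_of_def by (simp add: emeasure_eq_measure)
  have form: "emeasure M {\<omega>\<in>space M. X \<omega> + Y \<omega> \<le> y} = (\<integral>\<^sup>+t. emeasure M {\<omega>\<in>space M. X \<omega> + t \<le> y} \<partial>distr M borel Y)"
    by (rule indep_prob_formula[OF ind, where P="\<lambda>x t. x + t \<le> y"]) measurable
  have E: "emeasure M {\<omega>\<in>space M. X \<omega> + Y \<omega> \<le> y} = ennreal (cdf_of M (\<lambda>\<omega>. X \<omega> + Y \<omega>) y)"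
    unfolding cdf_of_def by (simp add: emeasure_eq_measure)
  define J where "J = (\<integral>\<^sup>+t. ennreal ((max 0 (y - t)) powr a) \<partial>distr M borel Y)"
  have LC: "J = (\<integral>\<^sup>+s. ennreal (indicator {..y} s * (a * (y - s) powr (a-1))) * emeasure M {\<omega>\<in>space M. Y \<omega> \<le> s} \<partial>lborel)"
    unfolding J_def using a by (intro layer_cake[OF Ym])
  define w where "w s = a * (y - s) powr (a - 1) * s powr b" for s
  have Iw: "(\<integral>\<^sup>+s. ennreal (indicator {0..y} s * (K * w s)) \<partial>lborel) = ennreal (K * (\<beta> * y powr (a+b)))" if K: "K \<ge> 0" for K
  proof -
    have "((\<lambda>s. K * w s) has_integral K * (\<beta> * y powr (a+b))) {0..y}"
      unfolding w_def \<beta>_def using hi_beta0[OF a _ y(1), of b] b by (intro has_integral_mult_right) auto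
    then show ?thesis
      using K y a by (intro nn_integral_has_integral_lebesgue) (auto simp: w_def intro!: mult_nonneg_nonneg)
  qed
  have U2: "J \<le> ennreal (C * (\<beta> * y powr (a+b)))"
  proof -
    have "J \<le> (\<integral>\<^sup>+s. ennreal (indicator {0..y} s * (C * w s)) \<partial>lborel)"
      unfolding LC
    proof (intro nn_integral_mono)
      fix s :: real
      show "ennreal (indicator {..y} s * (a * (y - s) powr (a-1))) * emeasure M {\<omega>\<in>space M. Y \<omega> \<le> s} \<le>
          ennreal (indicator {0..y} s * (C * w s))"
      proof (cases "0 \<le> s \<and> s \<le> y")
        case True
        have "cdf_of M Y s \<le> C * s powr b" using FY[of s] True y by auto
        then have "a * (y - s) powr (a-1) * cdf_of M Y s \<le> a * (y - s) powr (a-1) * (C * s powr b)"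
          using a by (intro mult_left_mono) auto
        then have "a * (y - s) powr (a-1) * cdf_of M Y s \<le> C * w s" unfolding w_def by (simp add: mult_ac)
        then show ?thesis using True a
          by (simp add: emY indicator_def ennreal_mult[symmetric] cdf_nonneg ennreal_leI)
      next
        case False
        then show ?thesis
        proof (cases "s \<le> y")
          case True
          with False have "s < 0" by auto
          then show ?thesis using FY0[of s] by (simp add: emY)
        qed (auto simp: indicator_def)
      qed
    qed
    also have "\<dots> = ennreal (C * (\<beta> * y powr (a+b)))" using ABCD by (intro Iw) auto
    finally show ?thesis .
  qed
  then obtain Jr where Jr: "J = ennreal Jr" "0 \<le> Jr"
    by (cases J rule: ennreal_cases) (auto simp: top_unique)
  have Jr2: "Jr \<le> C * (\<beta> * y powr (a+b))"
  proof -
    have "ennreal Jr \<le> ennreal (C * (\<beta> * y powr (a+b)))" using U2 Jr(1) by simp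
    then show ?thesis using ABCD bpos by (subst (asm) ennreal_le_iff) (auto intro!: mult_nonneg_nonneg)
  qed
  have L2: "C * (\<beta> * y powr (a+b)) \<le> Jr + (D * y powr \<eta>) * (\<beta> * y powr (a+b))"
  proof -
    have "ennreal (C * (\<beta> * y powr (a+b))) = (\<integral>\<^sup>+s. ennreal (indicator {0..y} s * (C * w s)) \<partial>lborel)"
      using ABCD by (intro Iw[symmetric]) auto
    also have "\<dots> \<le> (\<integral>\<^sup>+s. ennreal (indicator {..y} s * (a * (y - s) powr (a-1))) * emeasure M {\<omega>\<in>space M. Y \<omega> \<le> s}
         + ennreal (indicator {0..y} s * ((D * y powr \<eta>) * w s)) \<partial>lborel)"
    proof (intro nn_integral_mono)
      fix s :: real
      show "ennreal (indicator {0..y} s * (C * w s)) \<le> ennreal (indicator {..y} s * (a * (y - s) powr (a-1))) * emeasure M {\<omega>\<in>space M. Y \<omega> \<le> s}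
         + ennreal (indicator {0..y} s * ((D * y powr \<eta>) * w s))"
      proof (cases "0 \<le> s \<and> s \<le> y")
        case True
        have c1: "C * s powr b \<le> cdf_of M Y s + D * s powr (b+\<eta>)" using FY[of s] True y by auto
        have "s powr (b+\<eta>) = s powr b * s powr \<eta>" by (simp add: powr_add)
        also have "\<dots> \<le> s powr b * y powr \<eta>" using True eta by (intro mult_left_mono powr_mono2) auto
        finally have c2: "D * s powr (b+\<eta>) \<le> D * (s powr b * y powr \<eta>)" using ABCD by (intro mult_left_mono) auto
        have q: "0 \<le> a * (y - s) powr (a-1)" using a by auto
        have "C * w s = a * (y - s) powr (a-1) * (C * s powr b)" unfolding w_def by (simp add: mult_ac)
        also have "\<dots> \<le> a * (y - s) powr (a-1) * (cdf_of M Y s + D * (s powr b * y powr \<eta>))"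
          using c1 c2 q by (intro mult_left_mono) auto
        also have "\<dots> = a * (y - s) powr (a-1) * cdf_of M Y s + (D * y powr \<eta>) * w s"
          unfolding w_def by (simp add: algebra_simps)
        finally have r: "C * w s \<le> a * (y - s) powr (a-1) * cdf_of M Y s + (D * y powr \<eta>) * w s" .
        have nn: "0 \<le> a * (y - s) powr (a-1) * cdf_of M Y s" "0 \<le> (D * y powr \<eta>) * w s"
          using q ABCD True unfolding w_def by (auto intro!: mult_nonneg_nonneg cdf_nonneg)
        have "ennreal (C * w s) \<le> ennreal (a * (y - s) powr (a-1) * cdf_of M Y s) + ennreal ((D * y powr \<eta>) * w s)"
          using r nn by (simp add: ennreal_plus[symmetric] ennreal_leI del: ennreal_plus)
        then show ?thesis using True q
          by (simp add: emY indicator_def ennreal_mult[symmetric] cdf_nonneg)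
      qed (auto simp: indicator_def)
    qed
    also have "\<dots> = J + (\<integral>\<^sup>+s. ennreal (indicator {0..y} s * ((D * y powr \<eta>) * w s)) \<partial>lborel)"
      unfolding LC
    proof (rule nn_integral_add)
      have "(\<lambda>s. emeasure M {\<omega>\<in>space M. Y \<omega> \<le> s}) \<in> borel_measurable borel"
        using emeasure_section_meas[OF Ym, of "\<lambda>x s. x \<le> s"] by simp
      then show "(\<lambda>s. ennreal (indicator {..y} s * (a * (y - s) powr (a-1))) * emeasure M {\<omega>\<in>space M. Y \<omega> \<le> s}) \<in> borel_measurable lborel"
        by measurable
      show "(\<lambda>s. ennreal (indicator {0..y} s * ((D * y powr \<eta>) * w s))) \<in> borel_measurable lborel"
        unfolding w_def by measurable
    qed
    also have "(\<integral>\<^sup>+s. ennreal (indicator {0..y} s * ((D * y powr \<eta>) * w s)) \<partial>lborel) = ennreal ((D * y powr \<eta>) * (\<beta> * y powr (a+b)))"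
      using ABCD by (intro Iw) auto
    finally have "ennreal (C * (\<beta> * y powr (a+b))) \<le> ennreal (Jr + (D * y powr \<eta>) * (\<beta> * y powr (a+b)))"
      using Jr ABCD bpos by (simp add: ennreal_plus)
    then show ?thesis using Jr ABCD bpos by (subst (asm) ennreal_le_iff) (auto intro!: add_nonneg_nonneg mult_nonneg_nonneg)
  qed
  have U1: "cdf_of M (\<lambda>\<omega>. X \<omega> + Y \<omega>) y \<le> A * Jr"
  proof -
    have "ennreal (cdf_of M (\<lambda>\<omega>. X \<omega> + Y \<omega>) y) \<le> (\<integral>\<^sup>+t. ennreal A * ennreal ((max 0 (y - t)) powr a) \<partial>distr M borel Y)"
      unfolding E[symmetric] form
    proof (rule nn_integral_mono_AE)
      show "AE t in distr M borel Y. emeasure M {\<omega>\<in>space M. X \<omega> + t \<le> y} \<le> ennreal A * ennreal ((max 0 (y - t)) powr a)"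
        using AEY
      proof eventually_elim
        case (elim t)
        show ?case
        proof (cases "t \<le> y")
          case True
          then have "cdf_of M X (y - t) \<le> A * (y - t) powr a" using FX[of "y - t"] elim y by auto
          then show ?thesis using True ABCD by (simp add: emX ennreal_mult[symmetric] ennreal_leI)
        next
          case False
          then show ?thesis using FX0[of "y - t"] by (simp add: emX)
        qed
      qed
    qed
    also have "\<dots> = ennreal A * J" unfolding J_def by (rule nn_integral_cmult) measurable
    also have "\<dots> = ennreal (A * Jr)" using Jr ABCD by (simp add: ennreal_mult)
    finally show ?thesis using Jr ABCD by (subst (asm) ennreal_le_iff) auto
  qed
  have L1: "A * Jr \<le> cdf_of M (\<lambda>\<omega>. X \<omega> + Y \<omega>) y + B * y powr (a+\<eta>) * (C * y powr b)"
  proof -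
    have "ennreal (A * Jr) = (\<integral>\<^sup>+t. ennreal A * ennreal ((max 0 (y - t)) powr a) \<partial>distr M borel Y)"
    proof -
      have "(\<integral>\<^sup>+t. ennreal A * ennreal ((max 0 (y - t)) powr a) \<partial>distr M borel Y) = ennreal A * J"
        unfolding J_def by (rule nn_integral_cmult) measurable
      then show ?thesis using Jr ABCD by (simp add: ennreal_mult)
    qed
    also have "\<dots> \<le> (\<integral>\<^sup>+t. emeasure M {\<omega>\<in>space M. X \<omega> + t \<le> y} + ennreal (B * y powr (a+\<eta>)) * indicator {..y} t \<partial>distr M borel Y)"
    proof (rule nn_integral_mono_AE)
      show "AE t in distr M borel Y. ennreal A * ennreal ((max 0 (y - t)) powr a) \<le> emeasure M {\<omega>\<in>space M. X \<omega> + t \<le> y} + ennreal (B * y powr (a+\<eta>)) * indicator {..y} t"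
        using AEY
      proof eventually_elim
        case (elim t)
        show ?case
        proof (cases "t \<le> y")
          case True
          have c1: "A * (y - t) powr a \<le> cdf_of M X (y - t) + B * (y - t) powr (a+\<eta>)" using FX[of "y - t"] elim y True by auto
          have "(y - t) powr (a+\<eta>) \<le> y powr (a+\<eta>)" using elim True eta a by (intro powr_mono2) auto
          then have "B * (y - t) powr (a+\<eta>) \<le> B * y powr (a+\<eta>)" using ABCD by (intro mult_left_mono) auto
          with c1 have r: "A * (y - t) powr a \<le> cdf_of M X (y - t) + B * y powr (a+\<eta>)" by simp
          have "ennreal (A * (y - t) powr a) \<le> ennreal (cdf_of M X (y - t)) + ennreal (B * y powr (a+\<eta>))"
            using r ABCD cdf_nonneg[of X "y - t"] by (simp add: ennreal_plus[symmetric] ennreal_leI del: ennreal_plus)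
          then show ?thesis using True ABCD by (simp add: emX ennreal_mult[symmetric])
        next
          case False
          then show ?thesis by simp
        qed
      qed
    qed
    also have "\<dots> = (\<integral>\<^sup>+t. emeasure M {\<omega>\<in>space M. X \<omega> + t \<le> y} \<partial>distr M borel Y) +
         (\<integral>\<^sup>+t. ennreal (B * y powr (a+\<eta>)) * indicator {..y} t \<partial>distr M borel Y)"
    proof (rule nn_integral_add)
      show "(\<lambda>t. emeasure M {\<omega>\<in>space M. X \<omega> + t \<le> y}) \<in> borel_measurable (distr M borel Y)"
        using emeasure_section_meas[OF Xm, of "\<lambda>x t. x + t \<le> y"] by simp
    qed auto
    also have "(\<integral>\<^sup>+t. ennreal (B * y powr (a+\<eta>)) * indicator {..y} t \<partial>distr M borel Y) = ennreal (B * y powr (a+\<eta>)) * emeasure (distr M borel Y) {..y}"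
      by (simp add: nn_integral_cmult_indicator)
    also have "emeasure (distr M borel Y) {..y} = ennreal (cdf_of M Y y)"
      using Ym by (subst emeasure_distr) (auto simp: emY[symmetric] intro!: arg_cong[where f="emeasure M"])
    also have "cdf_of M Y y \<le> C * y powr b" using FY[of y] y by auto
    finally have "ennreal (A * Jr) \<le> ennreal (cdf_of M (\<lambda>\<omega>. X \<omega> + Y \<omega>) y) + ennreal (B * y powr (a+\<eta>)) * ennreal (C * y powr b)"
      unfolding form[symmetric] E
      by (rule order.trans) (intro add_mono order.refl mult_left_mono ennreal_leI, auto)
    also have "\<dots> = ennreal (cdf_of M (\<lambda>\<omega>. X \<omega> + Y \<omega>) y + B * y powr (a+\<eta>) * (C * y powr b))"
      using ABCD by (simp add: ennreal_plus ennreal_mult cdf_nonneg)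
    finally show ?thesis using ABCD by (subst (asm) ennreal_le_iff) (auto intro!: add_nonneg_nonneg cdf_nonneg)
  qed
  have p1: "y powr \<eta> * y powr (a+b) = y powr (a+b+\<eta>)" by (simp add: powr_add[symmetric] add_ac)
  have p2: "y powr (a+\<eta>) * y powr b = y powr (a+b+\<eta>)" by (simp add: powr_add[symmetric] add_ac)
  show "cdf_of M (\<lambda>\<omega>. X \<omega> + Y \<omega>) y \<le> A * C * \<beta> * y powr (a+b)"
  proof -
    have "A * Jr \<le> A * (C * (\<beta> * y powr (a+b)))" using Jr2 ABCD by (intro mult_left_mono) auto
    then show ?thesis using U1 by (simp add: mult_ac)
  qed
  show "A * C * \<beta> * y powr (a+b) \<le> cdf_of M (\<lambda>\<omega>. X \<omega> + Y \<omega>) y + (B * C + A * D * \<beta>) * y powr (a+b+\<eta>)"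
  proof -
    have "A * (C * (\<beta> * y powr (a+b))) \<le> A * (Jr + (D * y powr \<eta>) * (\<beta> * y powr (a+b)))"
      using L2 ABCD by (intro mult_left_mono) auto
    also have "\<dots> = A * Jr + A * D * \<beta> * (y powr \<eta> * y powr (a+b))" by (simp add: algebra_simps)
    also have "\<dots> = A * Jr + A * D * \<beta> * y powr (a+b+\<eta>)" by (simp only: p1)
    also have "\<dots> \<le> cdf_of M (\<lambda>\<omega>. X \<omega> + Y \<omega>) y + B * y powr (a+\<eta>) * (C * y powr b) + A * D * \<beta> * y powr (a+b+\<eta>)"
      using L1 by simp
    also have "B * y powr (a+\<eta>) * (C * y powr b) = B * C * (y powr (a+\<eta>) * y powr b)" by (simp add: mult_ac)
    also have "\<dots> = B * C * y powr (a+b+\<eta>)" by (simp only: p2)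
    finally show ?thesis by (simp add: algebra_simps)
  qed
qed

end



context prob_space begin

lemma sum_bounds:
  fixes Z :: "nat \<Rightarrow> 'a \<Rightarrow> real"
  assumes K: "K \<ge> 1" and indep: "indep_vars (\<lambda>_. borel) Z {1..K}"
    and a: "a \<ge> 1" and eta: "\<eta> > 0" and AB: "A \<ge> 0" "B \<ge> 0"
    and FZ: "\<And>k u. k \<in> {1..K} \<Longrightarrow> 0 \<le> u \<Longrightarrow> u \<le> 1 \<Longrightarrow>
        cdf_of M (Z k) u \<le> A * u powr a \<and> A * u powr a \<le> cdf_of M (Z k) u + B * u powr (a+\<eta>)"
  shows "\<exists>B'. B' \<ge> 0 \<and> (\<forall>u. 0 \<le> u \<longrightarrow> u \<le> 1 \<longrightarrow>
      cdf_of M (\<lambda>\<omega>. \<Sum>k\<in>{1..K}. Z k \<omega>) u \<le> (A * Gamma (a+1)) ^ K / Gamma (a * real K + 1) * u powr (a * real K) \<and>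
      (A * Gamma (a+1)) ^ K / Gamma (a * real K + 1) * u powr (a * real K) \<le>
         cdf_of M (\<lambda>\<omega>. \<Sum>k\<in>{1..K}. Z k \<omega>) u + B' * u powr (a * real K + \<eta>))"
  using K indep FZ
proof (induction K rule: dec_induct)
  case base
  have G: "Gamma (a + 1) > 0" using a by (intro Gamma_real_pos) auto
  have eq: "(A * Gamma (a+1)) ^ 1 / Gamma (a * real 1 + 1) = A" using G by simp
  show ?case
    by (rule exI[of _ B]) (use AB G base.prems(2)[of 1] in \<open>auto simp: eq\<close>)
next
  case (step n)
  have ind_n: "indep_vars (\<lambda>_. borel) Z {1..n}"
    using step.prems(1) by (rule indep_vars_subset) auto
  from step.IH[OF ind_n] step.prems(2) obtain B' where B': "B' \<ge> 0"
    "\<And>u. 0 \<le> u \<Longrightarrow> u \<le> 1 \<Longrightarrow> cdf_of M (\<lambda>\<omega>. \<Sum>k\<in>{1..n}. Z k \<omega>) u \<le> (A * Gamma (a+1)) ^ n / Gamma (a * real n + 1) * u powr (a * real n) \<and>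
      (A * Gamma (a+1)) ^ n / Gamma (a * real n + 1) * u powr (a * real n) \<le>
         cdf_of M (\<lambda>\<omega>. \<Sum>k\<in>{1..n}. Z k \<omega>) u + B' * u powr (a * real n + \<eta>)"
    by force
  define C where "C = (A * Gamma (a+1)) ^ n / Gamma (a * real n + 1)"
  have n1: "real n \<ge> 1" using step.hyps by simp
  have G1: "Gamma (a + 1) > 0" using a by (intro Gamma_real_pos) auto
  have an0: "a * real n \<ge> 0" using a by simp
  have G2: "Gamma (a * real n + 1) > 0" using an0 by (intro Gamma_real_pos) linarith
  have G3: "Gamma (a + a * real n + 1) > 0" using an0 a by (intro Gamma_real_pos) linarith
  have C0: "C \<ge> 0" unfolding C_def using AB G1 G2 by auto
  have ins: "{1..Suc n} = insert (Suc n) {1..n}" by auto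
  have indv: "indep_var borel (Z (Suc n)) borel (\<lambda>\<omega>. \<Sum>k\<in>{1..n}. Z k \<omega>)"
    by (rule indep_vars_sum) (use step.prems(1) ins in auto)
  have an: "a * real n \<ge> 1" using a n1 by (metis mult_mono' mult_1 zero_le_one order.trans)
  define \<beta> where "\<beta> = Gamma (a+1) * Gamma (a * real n + 1) / Gamma (a + a * real n + 1)"
  have keq: "A * C * \<beta> = (A * Gamma (a+1)) ^ Suc n / Gamma (a * real (Suc n) + 1)"
    unfolding C_def \<beta>_def using G2 by (simp add: algebra_simps)
  have eeq: "a + a * real n = a * real (Suc n)" by (simp add: algebra_simps)
  have sum_eq: "(\<lambda>\<omega>. \<Sum>k\<in>{1..Suc n}. Z k \<omega>) = (\<lambda>\<omega>. Z (Suc n) \<omega> + (\<Sum>k\<in>{1..n}. Z k \<omega>))"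
    by (simp add: ins add.commute)
  show ?case
  proof (intro exI[of _ "B * C + A * B' * \<beta>"] conjI allI impI)
    have b0: "\<beta> \<ge> 0" unfolding \<beta>_def using G1 G2 G3 by simp
    show "0 \<le> B * C + A * B' * \<beta>" using AB C0 B'(1) b0 by simp
    fix u :: real assume u: "0 \<le> u" "u \<le> 1"
    note cb = conv_bounds[OF indv a an eta AB(1,2) C0 B'(1), of u, folded C_def \<beta>_def]
    have FX: "\<And>u. 0 \<le> u \<Longrightarrow> u \<le> 1 \<Longrightarrow> cdf_of M (Z (Suc n)) u \<le> A * u powr a \<and> A * u powr a \<le> cdf_of M (Z (Suc n)) u + B * u powr (a+\<eta>)"
      using step.prems(2)[of "Suc n"] by auto
    have FY: "\<And>u. 0 \<le> u \<Longrightarrow> u \<le> 1 \<Longrightarrow> cdf_of M (\<lambda>\<omega>. \<Sum>k\<in>{1..n}. Z k \<omega>) u \<le> C * u powr (a * real n) \<and> C * u powr (a * real n) \<le> cdf_of M (\<lambda>\<omega>. \<Sum>k\<in>{1..n}. Z k \<omega>) u + B' * u powr (a * real n + \<eta>)"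
      using B'(2) unfolding C_def by auto
    show "cdf_of M (\<lambda>\<omega>. \<Sum>k\<in>{1..Suc n}. Z k \<omega>) u \<le> (A * Gamma (a+1)) ^ Suc n / Gamma (a * real (Suc n) + 1) * u powr (a * real (Suc n))"
      using cb(1)[OF FX FY u] unfolding sum_eq keq[symmetric] eeq .
    have e2: "a + a * real n + \<eta> = a * real (Suc n) + \<eta>" by (simp add: algebra_simps)
    show "(A * Gamma (a+1)) ^ Suc n / Gamma (a * real (Suc n) + 1) * u powr (a * real (Suc n)) \<le>
         cdf_of M (\<lambda>\<omega>. \<Sum>k\<in>{1..Suc n}. Z k \<omega>) u + (B * C + A * B' * \<beta>) * u powr (a * real (Suc n) + \<eta>)"
      using cb(2)[OF FX FY u] unfolding sum_eq keq[symmetric] eeq e2 .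
  qed
qed

end



lemma sort_nth_le_iff:
  fixes xs :: "real list"
  assumes i: "i < length xs"
  shows "sort xs ! i \<le> y \<longleftrightarrow> i < length (filter (\<lambda>x. x \<le> y) xs)"
proof -
  define s where "s = sort xs"
  have srt: "sorted s" unfolding s_def by simp
  have len: "length s = length xs" unfolding s_def by simp
  have lf: "length (filter (\<lambda>x. x \<le> y) xs) = length (filter (\<lambda>x. x \<le> y) s)"
    unfolding s_def by (metis mset_filter mset_sort size_mset)
  have c: "length (filter (\<lambda>x. x \<le> y) s) = card {j. j < length s \<and> s ! j \<le> y}"
    by (rule length_filter_conv_card)
  show ?thesis unfolding s_def[symmetric] lf c
  proof
    assume h: "s ! i \<le> y"
    have "{0..i} \<subseteq> {j. j < length s \<and> s ! j \<le> y}"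
    proof
      fix j assume "j \<in> {0..i}"
      then have "j \<le> i" by simp
      then have "s ! j \<le> s ! i" using srt i len by (intro sorted_nth_mono) auto
      then show "j \<in> {j. j < length s \<and> s ! j \<le> y}" using h \<open>j \<le> i\<close> i len by auto
    qed
    then have "card {0..i} \<le> card {j. j < length s \<and> s ! j \<le> y}" by (intro card_mono) auto
    then show "i < card {j. j < length s \<and> s ! j \<le> y}" by simp
  next
    assume h: "i < card {j. j < length s \<and> s ! j \<le> y}"
    show "s ! i \<le> y"
    proof (rule ccontr)
      assume "\<not> s ! i \<le> y"
      then have "{j. j < length s \<and> s ! j \<le> y} \<subseteq> {0..<i}"
      proof (intro subsetI)
        fix j assume j: "j \<in> {j. j < length s \<and> s ! j \<le> y}"
        show "j \<in> {0..<i}"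
        proof (rule ccontr)
          assume "j \<notin> {0..<i}"
          then have "i \<le> j" by simp
          then have "s ! i \<le> s ! j" using srt j by (intro sorted_nth_mono) auto
          with j \<open>\<not> s ! i \<le> y\<close> show False by auto
        qed
      qed
      then have "card {j. j < length s \<and> s ! j \<le> y} \<le> card {0..<i}" by (intro card_mono) auto
      with h show False by simp
    qed
  qed
qed

lemma ord_stat_le_iff:
  assumes n: "1 \<le> n" "n \<le> N"
  shows "ord_stat N X n \<omega> \<le> y \<longleftrightarrow> n \<le> card {j\<in>{1..N}. X j \<omega> \<le> y}"
proof -
  have "ord_stat N X n \<omega> \<le> y \<longleftrightarrow> n - 1 < length (filter (\<lambda>x. x \<le> y) (map (\<lambda>i. X i \<omega>) [1..<N+1]))"
    unfolding ord_stat_def using n by (intro sort_nth_le_iff) auto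
  also have "length (filter (\<lambda>x. x \<le> y) (map (\<lambda>i. X i \<omega>) [1..<N+1])) = card {j\<in>{1..N}. X j \<omega> \<le> y}"
  proof -
    have "length (filter (\<lambda>x. x \<le> y) (map (\<lambda>i. X i \<omega>) [1..<N+1])) = length (filter (\<lambda>i. X i \<omega> \<le> y) [1..<N+1])"
      by (simp add: filter_map comp_def)
    also have "\<dots> = card (set (filter (\<lambda>i. X i \<omega> \<le> y) [1..<N+1]))"
      by (rule distinct_card[symmetric]) simp
    also have "set (filter (\<lambda>i. X i \<omega> \<le> y) [1..<N+1]) = {j\<in>{1..N}. X j \<omega> \<le> y}" by auto
    finally show ?thesis .
  qed
  finally show ?thesis using n by auto
qed

lemma card_as_sum: "real (card {j\<in>I. P j}) = (\<Sum>j\<in>I. if P j then 1 else 0)" if "finite I"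
proof -
  have "{j\<in>I. P j} = I \<inter> Collect P" by auto
  then show ?thesis using that by (simp add: sum.If_cases)
qed

context prob_space begin

lemma binom_count:
  fixes V :: "nat \<Rightarrow> 'a \<Rightarrow> real"
  assumes I: "finite I" "I \<noteq> {}" and indep: "indep_vars (\<lambda>_. borel) V I"
    and p: "\<And>j. j \<in> I \<Longrightarrow> prob {\<omega>\<in>space M. V j \<omega> \<le> y} = p"
  shows "prob {\<omega>\<in>space M. card {j\<in>I. V j \<omega> \<le> y} = k} = real (card I choose k) * p ^ k * (1 - p) ^ (card I - k)"
proof -
  have Vm: "\<And>j. j \<in> I \<Longrightarrow> random_variable borel (V j)" using indep unfolding indep_vars_def by auto
  define E where "E S = {\<omega>\<in>space M. {j\<in>I. V j \<omega> \<le> y} = S}" for S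
  define Aset where "Aset S j = (if j \<in> S then {..y} else {y<..})" for S and j :: nat
  have ES: "E S = (\<Inter>j\<in>I. V j -` Aset S j \<inter> space M)" if "S \<subseteq> I" for S
    using that I(2) unfolding E_def Aset_def by (auto split: if_splits)
  have pE: "prob (E S) = p ^ card S * (1 - p) ^ (card I - card S)" if S: "S \<subseteq> I" for S
  proof -
    have "prob (E S) = (\<Prod>j\<in>I. prob (V j -` Aset S j \<inter> space M))"
      unfolding ES[OF S] using I by (intro indep_varsD[OF indep]) (auto simp: Aset_def)
    also have "\<dots> = (\<Prod>j\<in>I. if j \<in> S then p else 1 - p)"
    proof (intro prod.cong refl)
      fix j assume j: "j \<in> I"
      have e1: "V j -` {..y} \<inter> space M = {\<omega>\<in>space M. V j \<omega> \<le> y}" by auto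
      have e2: "V j -` {y<..} \<inter> space M = space M - {\<omega>\<in>space M. V j \<omega> \<le> y}" by auto
      have "{\<omega>\<in>space M. V j \<omega> \<le> y} \<in> events" using Vm[OF j] by measurable
      then show "prob (V j -` Aset S j \<inter> space M) = (if j \<in> S then p else 1 - p)"
        using p[OF j] unfolding Aset_def by (auto simp: e1 e2 prob_compl)
    qed
    also have "\<dots> = p ^ card S * (1 - p) ^ (card I - card S)"
    proof -
      have "(\<Prod>j\<in>I. if j \<in> S then p else 1 - p) = (\<Prod>j\<in>I \<inter> S. p) * (\<Prod>j\<in>I \<inter> - S. 1 - p)"
        using prod.If_cases[OF I(1), of "\<lambda>j. j \<in> S" "\<lambda>_. p" "\<lambda>_. 1 - p"] by simp
      moreover have "I \<inter> S = S" using S by auto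
      moreover have "I \<inter> - S = I - S" by auto
      moreover have "card (I - S) = card I - card S" using S I by (simp add: card_Diff_subset finite_subset)
      ultimately show ?thesis by simp
    qed
    finally show ?thesis .
  qed
  define \<S> where "\<S> = {S. S \<subseteq> I \<and> card S = k}"
  have fS: "finite \<S>" unfolding \<S>_def using I by auto
  have un: "{\<omega>\<in>space M. card {j\<in>I. V j \<omega> \<le> y} = k} = (\<Union>S\<in>\<S>. E S)"
    unfolding \<S>_def E_def by auto
  have Emeas: "E S \<in> events" if "S \<subseteq> I" for S
  proof -
    have "V j -` Aset S j \<inter> space M \<in> events" if "j \<in> I" for j
      using Vm[OF that] unfolding Aset_def by (auto intro: measurable_sets)
    then show ?thesis unfolding ES[OF that] using I by (intro sets.finite_INT) auto
  qed
  have "prob (\<Union>S\<in>\<S>. E S) = (\<Sum>S\<in>\<S>. prob (E S))"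
  proof (rule finite_measure_finite_Union[OF fS])
    show "(\<lambda>S. E S) ` \<S> \<subseteq> events" using Emeas unfolding \<S>_def by auto
    show "disjoint_family_on E \<S>" unfolding disjoint_family_on_def E_def by auto
  qed
  also have "\<dots> = (\<Sum>S\<in>\<S>. p ^ k * (1 - p) ^ (card I - k))"
    by (intro sum.cong refl) (auto simp: \<S>_def pE)
  also have "\<dots> = real (card I choose k) * p ^ k * (1 - p) ^ (card I - k)"
  proof -
    have "card \<S> = card I choose k" unfolding \<S>_def using I by (simp add: n_subsets)
    then show ?thesis by simp
  qed
  finally show ?thesis unfolding un .
qed

lemma binom_atleast:
  fixes V :: "nat \<Rightarrow> 'a \<Rightarrow> real"
  assumes I: "finite I" "I \<noteq> {}" and indep: "indep_vars (\<lambda>_. borel) V I"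
    and p: "\<And>j. j \<in> I \<Longrightarrow> prob {\<omega>\<in>space M. V j \<omega> \<le> y} = p"
  shows "prob {\<omega>\<in>space M. n \<le> card {j\<in>I. V j \<omega> \<le> y}} = (\<Sum>k\<in>{n..card I}. real (card I choose k) * p ^ k * (1 - p) ^ (card I - k))"
proof -
  have Vm: "\<And>j. j \<in> I \<Longrightarrow> random_variable borel (V j)" using indep unfolding indep_vars_def by auto
  have le: "card {j\<in>I. V j \<omega> \<le> y} \<le> card I" for \<omega> using I by (intro card_mono) auto
  have un: "{\<omega>\<in>space M. n \<le> card {j\<in>I. V j \<omega> \<le> y}} = (\<Union>k\<in>{n..card I}. {\<omega>\<in>space M. card {j\<in>I. V j \<omega> \<le> y} = k})"
    using le by auto
  have meas: "{\<omega>\<in>space M. card {j\<in>I. V j \<omega> \<le> y} = k} \<in> events" for k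
  proof -
    have "(\<lambda>\<omega>. \<Sum>j\<in>I. if V j \<omega> \<le> y then 1 else (0::real)) \<in> borel_measurable M"
      using Vm by (intro borel_measurable_sum) measurable
    then have "{\<omega>\<in>space M. (\<Sum>j\<in>I. if V j \<omega> \<le> y then 1 else (0::real)) = real k} \<in> events" by measurable
    moreover have "{\<omega>\<in>space M. card {j\<in>I. V j \<omega> \<le> y} = k} = {\<omega>\<in>space M. (\<Sum>j\<in>I. if V j \<omega> \<le> y then 1 else (0::real)) = real k}"
    proof (intro Collect_cong conj_cong refl)
      fix \<omega>
      have "(card {j\<in>I. V j \<omega> \<le> y} = k) = (real (card {j\<in>I. V j \<omega> \<le> y}) = real k)" by (simp only: of_nat_eq_iff)
      also have "real (card {j\<in>I. V j \<omega> \<le> y}) = (\<Sum>j\<in>I. if V j \<omega> \<le> y then 1 else (0::real))"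
        by (rule card_as_sum[OF I(1)])
      finally show "(card {j\<in>I. V j \<omega> \<le> y} = k) = ((\<Sum>j\<in>I. if V j \<omega> \<le> y then 1 else (0::real)) = real k)" .
    qed
    ultimately show ?thesis by simp
  qed
  have "prob (\<Union>k\<in>{n..card I}. {\<omega>\<in>space M. card {j\<in>I. V j \<omega> \<le> y} = k}) = (\<Sum>k\<in>{n..card I}. prob {\<omega>\<in>space M. card {j\<in>I. V j \<omega> \<le> y} = k})"
    by (rule finite_measure_finite_Union) (auto simp: meas disjoint_family_on_def)
  also have "\<dots> = (\<Sum>k\<in>{n..card I}. real (card I choose k) * p ^ k * (1 - p) ^ (card I - k))"
    by (intro sum.cong refl binom_count[OF I indep p])
  finally show ?thesis unfolding un .
qed

end



lemma powr_to_0: "(\<eta>::real) > 0 \<Longrightarrow> ((\<lambda>u. u powr \<eta>) \<longlongrightarrow> 0) (at_right 0)"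
  by (intro tendsto_zero_powrI tendsto_ident_at tendsto_const)
     (auto simp: eventually_at_right_less eventually_mono[OF eventually_at_right_less])

lemma ev01: "eventually (\<lambda>u::real. 0 < u \<and> u < 1) (at_right 0)"
  using eventually_at_right_real[of 0 1] by simp

lemma sq_asymp:
  fixes F :: "real \<Rightarrow> real"
  assumes c: "c > 0" and eta: "\<eta> > 0"
    and FB: "\<And>u. 0 \<le> u \<Longrightarrow> u \<le> 1 \<Longrightarrow> F u \<le> c * u powr \<alpha> \<and> c * u powr \<alpha> \<le> F u + B * u powr (\<alpha>+\<eta>)"
  shows "F \<sim>[at_right 0] (\<lambda>u. c * u powr \<alpha>)"
proof (rule asymp_equiv_sandwich_real[where l="\<lambda>u. c * u powr \<alpha> - B * u powr (\<alpha>+\<eta>)" and u="\<lambda>u. c * u powr \<alpha>"])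
  show "(\<lambda>u. c * u powr \<alpha>) \<sim>[at_right 0] (\<lambda>u. c * u powr \<alpha>)" by simp
  show "(\<lambda>u. c * u powr \<alpha> - B * u powr (\<alpha>+\<eta>)) \<sim>[at_right 0] (\<lambda>u. c * u powr \<alpha>)"
  proof (rule asymp_equivI')
    have "((\<lambda>u. 1 - (B / c) * u powr \<eta>) \<longlongrightarrow> 1 - (B / c) * 0) (at_right 0)"
      by (intro tendsto_intros powr_to_0 eta)
    then have lim: "((\<lambda>u. 1 - (B / c) * u powr \<eta>) \<longlongrightarrow> 1) (at_right 0)" by simp
    show "((\<lambda>u. (c * u powr \<alpha> - B * u powr (\<alpha>+\<eta>)) / (c * u powr \<alpha>)) \<longlongrightarrow> 1) (at_right 0)"
    proof (rule Lim_transform_eventually[OF lim])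
      show "\<forall>\<^sub>F u in at_right 0. 1 - B / c * u powr \<eta> = (c * u powr \<alpha> - B * u powr (\<alpha>+\<eta>)) / (c * u powr \<alpha>)"
        using eventually_at_right_less
      proof eventually_elim
        case (elim u)
        then show ?case using c by (simp add: powr_add field_simps)
      qed
    qed
  qed
  show "\<forall>\<^sub>F u in at_right 0. F u \<in> {c * u powr \<alpha> - B * u powr (\<alpha>+\<eta>)..c * u powr \<alpha>}"
    using ev01
  proof eventually_elim
    case (elim u)
    then show ?case using FB[of u] by auto
  qed
qed

lemma asymp_scale:
  fixes F :: "real \<Rightarrow> real"
  assumes F: "F \<sim>[at_right 0] (\<lambda>u. c * u powr \<alpha>)" and d: "d > 0"
  shows "(\<lambda>y. F (y / d)) \<sim>[at_right 0] (\<lambda>y. (c / d powr \<alpha>) * y powr \<alpha>)"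
proof -
  have fl: "filterlim (\<lambda>y. y / d) (at_right 0) (at_right 0)"
    unfolding filterlim_at
  proof
    show "\<forall>\<^sub>F x in at_right 0. x / d \<in> {0<..} \<and> x / d \<noteq> 0"
      using eventually_at_right_less by eventually_elim (use d in auto)
    have "((\<lambda>y. y / d) \<longlongrightarrow> 0 / d) (at_right 0)" using d by (intro tendsto_intros) auto
    then show "((\<lambda>y. y / d) \<longlongrightarrow> 0) (at_right 0)" by simp
  qed
  have "(\<lambda>y. F (y / d)) \<sim>[at_right 0] (\<lambda>y. c * (y / d) powr \<alpha>)"
    using asymp_equiv_compose'[OF F fl] by simp
  also have "(\<lambda>y. c * (y / d) powr \<alpha>) \<sim>[at_right 0] (\<lambda>y. (c / d powr \<alpha>) * y powr \<alpha>)"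
  proof (rule asymp_equiv_refl_ev)
    show "\<forall>\<^sub>F y in at_right 0. c * (y / d) powr \<alpha> = c / d powr \<alpha> * y powr \<alpha>"
      using eventually_at_right_less by eventually_elim (use d in \<open>simp add: powr_divide\<close>)
  qed
  finally show ?thesis .
qed

lemma binom_asymp:
  fixes p :: "real \<Rightarrow> real"
  assumes p: "p \<sim>[at_right 0] (\<lambda>y. \<xi> * y powr \<alpha>)" and xi: "\<xi> > 0" and alpha: "\<alpha> > 0"
    and n: "1 \<le> n" "n \<le> N"
  shows "(\<lambda>y. \<Sum>k\<in>{n..N}. real (N choose k) * p y ^ k * (1 - p y) ^ (N - k)) \<sim>[at_right 0]
         (\<lambda>y. real (N choose n) * \<xi> ^ n * y powr (\<alpha> * real n))"
proof -
  define H where "H q = (\<Sum>k\<in>{n..N}. real (N choose k) * q ^ (k - n) * (1 - q) ^ (N - k))" for q :: real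
  have H0: "H 0 = real (N choose n)"
  proof -
    have "H 0 = (\<Sum>k\<in>{n..N}. if k = n then real (N choose k) else 0)"
      unfolding H_def by (intro sum.cong refl) auto
    also have "\<dots> = real (N choose n)" using n by simp
    finally show ?thesis .
  qed
  have Hc: "continuous_on UNIV H" unfolding H_def by (intro continuous_intros)
  have lim0: "((\<lambda>y. \<xi> * y powr \<alpha>) \<longlongrightarrow> \<xi> * 0) (at_right 0)"
    by (intro tendsto_intros powr_to_0 alpha)
  have plim: "(p \<longlongrightarrow> 0) (at_right 0)"
    using asymp_equiv_tendsto_transfer[OF asymp_equiv_symI[OF p]] lim0 by simp
  have Hlim: "((\<lambda>y. H (p y)) \<longlongrightarrow> real (N choose n)) (at_right 0)"
  proof -
    have "((\<lambda>y. H (p y)) \<longlongrightarrow> H 0) (at_right 0)"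
      using Hc plim by (intro continuous_on_tendsto_compose[OF Hc plim]) auto
    then show ?thesis using H0 by simp
  qed
  have Nn: "real (N choose n) \<noteq> 0" using n by simp
  have e1: "(\<lambda>y. H (p y)) \<sim>[at_right 0] (\<lambda>_. real (N choose n))"
    by (rule tendsto_imp_asymp_equiv_const[OF Hlim Nn])
  have e2: "(\<lambda>y. p y ^ n) \<sim>[at_right 0] (\<lambda>y. (\<xi> * y powr \<alpha>) ^ n)"
    by (rule asymp_equiv_power[OF p])
  have AA: "(\<lambda>y. p y ^ n * H (p y)) \<sim>[at_right 0] (\<lambda>y. (\<xi> * y powr \<alpha>) ^ n * real (N choose n))"
    by (rule asymp_equiv_mult[OF e2 e1])
  have BB: "(\<lambda>y. \<Sum>k\<in>{n..N}. real (N choose k) * p y ^ k * (1 - p y) ^ (N - k)) = (\<lambda>y. p y ^ n * H (p y))"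
  proof
    fix y
    have "p y ^ n * H (p y) = (\<Sum>k\<in>{n..N}. real (N choose k) * (p y ^ n * p y ^ (k - n)) * (1 - p y) ^ (N - k))"
      unfolding H_def by (simp add: sum_distrib_left mult_ac)
    also have "\<dots> = (\<Sum>k\<in>{n..N}. real (N choose k) * p y ^ k * (1 - p y) ^ (N - k))"
      by (intro sum.cong refl) (auto simp: power_add[symmetric])
    finally show "(\<Sum>k\<in>{n..N}. real (N choose k) * p y ^ k * (1 - p y) ^ (N - k)) = p y ^ n * H (p y)" by simp
  qed
  have CC: "\<forall>\<^sub>F y in at_right 0. (\<xi> * y powr \<alpha>) ^ n * real (N choose n) = real (N choose n) * \<xi> ^ n * y powr (\<alpha> * real n)"
    using eventually_at_right_less
  proof eventually_elim
    case (elim y)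
    then have "(y powr \<alpha>) ^ n = y powr (\<alpha> * real n)" by (simp add: powr_realpow[symmetric] powr_powr)
    then show ?case by (simp add: power_mult_distrib mult_ac)
  qed
  show ?thesis unfolding BB using asymp_equiv_trans[OF AA asymp_equiv_refl_ev[OF CC]] .
qed

lemma asym_cdf_asymp:
  assumes n: "1 \<le> n" "n \<le> N" and alpha: "2 * ms * real K > 0" and xi: "\<xi> > 0"
  shows "asym_cdf N n K ms \<xi> \<sim>[at_right 0] (\<lambda>y. real (N choose n) * \<xi> ^ n * y powr (2 * ms * real K * real n))"
proof -
  define \<alpha> where "\<alpha> = 2 * ms * real K"
  define c0 where "c0 = fact N / (fact (N - n) * fact (n - 1) :: real)"
  define coef where "coef i = real (N - n choose i) * (-1) ^ i / real (n + i) * \<xi> ^ (n + i)" for i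
  define T where "T y = c0 * (\<Sum>i=0..N-n. coef i * y powr (\<alpha> * real i))" for y
  have c0: "c0 / real n = real (N choose n)"
  proof -
    have h: "(fact n * fact (N - n) * (N choose n) :: nat) = fact N"
      by (rule binomial_fact_lemma) (use n in simp)
    have fN: "fact N = real (N choose n) * (fact n * fact (N - n))"
      by (metis h of_nat_fact of_nat_mult mult.commute)
    have fn: "fact n = real n * (fact (n - 1) :: real)" using n by (simp add: fact_reduce)
    have "c0 / real n = fact N / (fact n * fact (N - n))"
      unfolding c0_def fn by (simp add: mult_ac)
    also have "\<dots> = real (N choose n)" unfolding fN by simp
    finally show ?thesis .
  qed
  have lim_i: "((\<lambda>y. y powr (\<alpha> * real i)) \<longlongrightarrow> (if i = 0 then 1 else 0)) (at_right 0)" for i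
  proof (cases "i = 0")
    case True
    have "\<forall>\<^sub>F y in at_right 0. 1 = y powr (\<alpha> * real i)"
      using eventually_at_right_less by eventually_elim (use True in auto)
    then show ?thesis using True by (auto intro: Lim_transform_eventually[OF tendsto_const])
  next
    case False
    then have "\<alpha> * real i > 0" using alpha unfolding \<alpha>_def by simp
    then show ?thesis using False powr_to_0 by simp
  qed
  have Tlim: "(T \<longlongrightarrow> c0 * (\<Sum>i=0..N-n. coef i * (if i = 0 then 1 else 0))) (at_right 0)"
    unfolding T_def by (intro tendsto_mult tendsto_const tendsto_sum lim_i)
  have "(\<Sum>i=0..N-n. coef i * (if i = 0 then 1 else 0)) = (\<Sum>i=0..N-n. if i = 0 then coef i else 0)"
    by (intro sum.cong refl) auto
  also have "\<dots> = coef 0" by (subst sum.delta) auto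
  also have "coef 0 = \<xi> ^ n / real n" unfolding coef_def by simp
  finally have "c0 * (\<Sum>i=0..N-n. coef i * (if i = 0 then 1 else 0)) = real (N choose n) * \<xi> ^ n"
    using c0 by (metis times_divide_eq_left times_divide_eq_right)
  with Tlim have Tlim': "(T \<longlongrightarrow> real (N choose n) * \<xi> ^ n) (at_right 0)" by simp
  have nz: "real (N choose n) * \<xi> ^ n \<noteq> 0" using n xi by simp
  have e1: "T \<sim>[at_right 0] (\<lambda>_. real (N choose n) * \<xi> ^ n)"
    by (rule tendsto_imp_asymp_equiv_const[OF Tlim' nz])
  have AA: "(\<lambda>y. T y * y powr (\<alpha> * real n)) \<sim>[at_right 0] (\<lambda>y. real (N choose n) * \<xi> ^ n * y powr (\<alpha> * real n))"
    using asymp_equiv_mult[OF e1 asymp_equiv_refl] .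
  have BB: "\<forall>\<^sub>F y in at_right 0. asym_cdf N n K ms \<xi> y = T y * y powr (\<alpha> * real n)"
  proof (rule always_eventually, intro allI)
    fix y :: real
    have pw: "y powr (\<alpha> * real (n + i)) = y powr (\<alpha> * real i) * y powr (\<alpha> * real n)" for i
    proof -
      have "\<alpha> * real (n + i) = \<alpha> * real i + \<alpha> * real n" by (simp add: distrib_left)
      then show ?thesis by (simp only: powr_add)
    qed
    have "asym_cdf N n K ms \<xi> y = c0 * (\<Sum>i=0..N-n. coef i * y powr (\<alpha> * real (n + i)))"
      unfolding asym_cdf_def c0_def coef_def \<alpha>_def ..
    also have "\<dots> = c0 * (\<Sum>i=0..N-n. coef i * y powr (\<alpha> * real i) * y powr (\<alpha> * real n))"
      by (simp only: pw mult.assoc)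
    also have "\<dots> = T y * y powr (\<alpha> * real n)"
      unfolding T_def by (simp only: sum_distrib_right mult.assoc)
    finally show "asym_cdf N n K ms \<xi> y = T y * y powr (\<alpha> * real n)" .
  qed
  show ?thesis using asymp_equiv_trans[OF asymp_equiv_refl_ev[OF BB] AA] unfolding \<alpha>_def .
qed




context prob_space begin

lemma count_atleast:
  fixes V :: "nat \<Rightarrow> 'a \<Rightarrow> real"
  assumes I: "finite I" "I \<noteq> {}" and indep: "indep_vars (\<lambda>_. borel) V I"
  shows "prob {\<omega>\<in>space M. n \<le> card {j\<in>I. V j \<omega> \<le> y}} =
    (\<Sum>S\<in>{S. S \<subseteq> I \<and> n \<le> card S}. (\<Prod>j\<in>S. prob {\<omega>\<in>space M. V j \<omega> \<le> y}) * (\<Prod>j\<in>I - S. 1 - prob {\<omega>\<in>space M. V j \<omega> \<le> y}))"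
proof -
  define q where "q j = prob {\<omega>\<in>space M. V j \<omega> \<le> y}" for j
  have Vm: "\<And>j. j \<in> I \<Longrightarrow> random_variable borel (V j)" using indep unfolding indep_vars_def by auto
  define E where "E S = {\<omega>\<in>space M. {j\<in>I. V j \<omega> \<le> y} = S}" for S
  define Aset where "Aset S j = (if j \<in> S then {..y} else {y<..})" for S and j :: nat
  have ES: "E S = (\<Inter>j\<in>I. V j -` Aset S j \<inter> space M)" if "S \<subseteq> I" for S
    using that I(2) unfolding E_def Aset_def by (auto split: if_splits)
  have pE: "prob (E S) = (\<Prod>j\<in>S. q j) * (\<Prod>j\<in>I - S. 1 - q j)" if S: "S \<subseteq> I" for S
  proof -
    have "prob (E S) = (\<Prod>j\<in>I. prob (V j -` Aset S j \<inter> space M))"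
      unfolding ES[OF S] using I by (intro indep_varsD[OF indep]) (auto simp: Aset_def)
    also have "\<dots> = (\<Prod>j\<in>I. if j \<in> S then q j else 1 - q j)"
    proof (intro prod.cong refl)
      fix j assume j: "j \<in> I"
      have e1: "V j -` {..y} \<inter> space M = {\<omega>\<in>space M. V j \<omega> \<le> y}" by auto
      have e2: "V j -` {y<..} \<inter> space M = space M - {\<omega>\<in>space M. V j \<omega> \<le> y}" by auto
      have "{\<omega>\<in>space M. V j \<omega> \<le> y} \<in> events" using Vm[OF j] by measurable
      then show "prob (V j -` Aset S j \<inter> space M) = (if j \<in> S then q j else 1 - q j)"
        unfolding Aset_def q_def by (auto simp: e1 e2 prob_compl)
    qed
    also have "\<dots> = (\<Prod>j\<in>S. q j) * (\<Prod>j\<in>I - S. 1 - q j)"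
    proof -
      have "(\<Prod>j\<in>I. if j \<in> S then q j else 1 - q j) = (\<Prod>j\<in>I \<inter> {j. j \<in> S}. q j) * (\<Prod>j\<in>I \<inter> - {j. j \<in> S}. 1 - q j)"
        using prod.If_cases[OF I(1), of "\<lambda>j. j \<in> S" q "\<lambda>j. 1 - q j"] by simp
      moreover have "I \<inter> {j. j \<in> S} = S" using S by auto
      moreover have "I \<inter> - {j. j \<in> S} = I - S" by auto
      ultimately show ?thesis by simp
    qed
    finally show ?thesis .
  qed
  define \<S> where "\<S> = {S. S \<subseteq> I \<and> n \<le> card S}"
  have fS: "finite \<S>" unfolding \<S>_def using I by auto
  have un: "{\<omega>\<in>space M. n \<le> card {j\<in>I. V j \<omega> \<le> y}} = (\<Union>S\<in>\<S>. E S)"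
    unfolding \<S>_def E_def by auto
  have Emeas: "E S \<in> events" if "S \<subseteq> I" for S
  proof -
    have "V j -` Aset S j \<inter> space M \<in> events" if "j \<in> I" for j
      using Vm[OF that] unfolding Aset_def by (auto intro: measurable_sets)
    then show ?thesis unfolding ES[OF that] using I by (intro sets.finite_INT) auto
  qed
  have "prob (\<Union>S\<in>\<S>. E S) = (\<Sum>S\<in>\<S>. prob (E S))"
  proof (rule finite_measure_finite_Union[OF fS])
    show "(\<lambda>S. E S) ` \<S> \<subseteq> events" using Emeas unfolding \<S>_def by auto
    show "disjoint_family_on E \<S>" unfolding disjoint_family_on_def E_def by auto
  qed
  also have "\<dots> = (\<Sum>S\<in>\<S>. (\<Prod>j\<in>S. q j) * (\<Prod>j\<in>I - S. 1 - q j))"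
    by (intro sum.cong refl) (auto simp: \<S>_def pE)
  finally show ?thesis unfolding un \<S>_def q_def .
qed

end

lemma asymp_ratio_lim:
  fixes P :: "real \<Rightarrow> real"
  assumes P: "P \<sim>[at_right 0] (\<lambda>y. \<xi> * y powr \<alpha>)" and xi: "\<xi> > 0"
  shows "((\<lambda>y. P y / y powr \<alpha>) \<longlongrightarrow> \<xi>) (at_right 0)"
proof -
  have "(\<lambda>y. P y / y powr \<alpha>) \<sim>[at_right 0] (\<lambda>y. \<xi> * y powr \<alpha> / y powr \<alpha>)"
    by (rule asymp_equiv_divide[OF P asymp_equiv_refl])
  moreover have "((\<lambda>y. \<xi> * y powr \<alpha> / y powr \<alpha>) \<longlongrightarrow> \<xi>) (at_right 0)"
  proof (rule Lim_transform_eventually[OF tendsto_const])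
    show "\<forall>\<^sub>F y in at_right 0. \<xi> = \<xi> * y powr \<alpha> / y powr \<alpha>"
      using eventually_at_right_less by eventually_elim simp
  qed
  ultimately show ?thesis using asymp_equiv_tendsto_transfer asymp_equiv_symI by blast
qed

lemma multi_asymp:
  fixes P :: "nat \<Rightarrow> real \<Rightarrow> real"
  assumes I: "finite I" and n: "1 \<le> n" "n \<le> card I"
    and P: "\<And>j. j \<in> I \<Longrightarrow> P j \<sim>[at_right 0] (\<lambda>y. \<xi> * y powr \<alpha>)" and xi: "\<xi> > 0" and alpha: "\<alpha> > 0"
  shows "(\<lambda>y. \<Sum>S\<in>{S. S \<subseteq> I \<and> n \<le> card S}. (\<Prod>j\<in>S. P j y) * (\<Prod>j\<in>I - S. 1 - P j y))
         \<sim>[at_right 0] (\<lambda>y. real (card I choose n) * \<xi> ^ n * y powr (\<alpha> * real n))"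
proof (rule asymp_equivI')
  define \<S> where "\<S> = {S. S \<subseteq> I \<and> n \<le> card S}"
  have fS: "finite \<S>" unfolding \<S>_def using I by auto
  define C where "C = real (card I choose n) * \<xi> ^ n"
  have Cpos: "C > 0" unfolding C_def using n xi by simp
  have lim0: "((\<lambda>y. \<xi> * y powr \<alpha>) \<longlongrightarrow> \<xi> * 0) (at_right 0)"
    by (intro tendsto_intros powr_to_0 alpha)
  have Plim: "((\<lambda>y. P j y) \<longlongrightarrow> 0) (at_right 0)" if "j \<in> I" for j
    using asymp_equiv_tendsto_transfer[OF asymp_equiv_symI[OF P[OF that]]] lim0 by simp
  have Rlim: "((\<lambda>y. P j y / y powr \<alpha>) \<longlongrightarrow> \<xi>) (at_right 0)" if "j \<in> I" for j
    by (rule asymp_ratio_lim[OF P[OF that] xi])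
  define trm where "trm S y = (\<Prod>j\<in>S. P j y / y powr \<alpha>) * y powr (\<alpha> * (real (card S) - real n)) * (\<Prod>j\<in>I - S. 1 - P j y)" for S y
  have tlim: "((\<lambda>y. trm S y) \<longlongrightarrow> (if card S = n then \<xi> ^ n else 0)) (at_right 0)" if S: "S \<in> \<S>" for S
  proof -
    have SI: "S \<subseteq> I" "n \<le> card S" using S unfolding \<S>_def by auto
    have l1: "((\<lambda>y. \<Prod>j\<in>S. P j y / y powr \<alpha>) \<longlongrightarrow> (\<Prod>j\<in>S. \<xi>)) (at_right 0)"
      using SI by (intro tendsto_prod Rlim) auto
    have l3: "((\<lambda>y. \<Prod>j\<in>I - S. 1 - P j y) \<longlongrightarrow> (\<Prod>j\<in>I - S. 1 - 0)) (at_right 0)"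
      by (intro tendsto_prod tendsto_diff tendsto_const Plim) auto
    show ?thesis
    proof (cases "card S = n")
      case True
      have l2: "((\<lambda>y. y powr (\<alpha> * (real (card S) - real n))) \<longlongrightarrow> 1) (at_right 0)"
      proof (rule Lim_transform_eventually[OF tendsto_const])
        show "\<forall>\<^sub>F y in at_right 0. 1 = y powr (\<alpha> * (real (card S) - real n))"
          using eventually_at_right_less by eventually_elim (use True in simp)
      qed
      have "((\<lambda>y. trm S y) \<longlongrightarrow> (\<Prod>j\<in>S. \<xi>) * 1 * (\<Prod>j\<in>I - S. 1 - 0)) (at_right 0)"
        unfolding trm_def by (intro tendsto_mult l1 l2 l3)
      then show ?thesis using True by simp
    next
      case False
      with SI have gt: "real (card S) - real n > 0" by simp
      have l2: "((\<lambda>y. y powr (\<alpha> * (real (card S) - real n))) \<longlongrightarrow> 0) (at_right 0)"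
        using alpha gt by (intro powr_to_0) simp
      have "((\<lambda>y. trm S y) \<longlongrightarrow> (\<Prod>j\<in>S. \<xi>) * 0 * (\<Prod>j\<in>I - S. 1 - 0)) (at_right 0)"
        unfolding trm_def by (intro tendsto_mult l1 l2 l3)
      then show ?thesis using False by simp
    qed
  qed
  have "((\<lambda>y. \<Sum>S\<in>\<S>. trm S y) \<longlongrightarrow> (\<Sum>S\<in>\<S>. if card S = n then \<xi> ^ n else 0)) (at_right 0)"
    by (intro tendsto_sum tlim)
  moreover have "(\<Sum>S\<in>\<S>. if card S = n then \<xi> ^ n else 0) = C"
  proof -
    have "(\<Sum>S\<in>\<S>. if card S = n then \<xi> ^ n else 0) = (\<Sum>S\<in>{S. S \<subseteq> I \<and> card S = n}. \<xi> ^ n)"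
    proof -
      have "{S. S \<subseteq> I \<and> card S = n} = {S\<in>\<S>. card S = n}" unfolding \<S>_def by auto
      then show ?thesis using fS by (simp add: sum.If_cases Int_def conj_commute)
    qed
    also have "\<dots> = C" unfolding C_def using I by (simp add: n_subsets)
    finally show ?thesis .
  qed
  ultimately have "((\<lambda>y. \<Sum>S\<in>\<S>. trm S y) \<longlongrightarrow> C) (at_right 0)" by simp
  then have "((\<lambda>y. (\<Sum>S\<in>\<S>. trm S y) / C) \<longlongrightarrow> C / C) (at_right 0)"
    using Cpos by (intro tendsto_divide tendsto_const) auto
  then have lim: "((\<lambda>y. (\<Sum>S\<in>\<S>. trm S y) / C) \<longlongrightarrow> 1) (at_right 0)" using Cpos by simp
  show "((\<lambda>y. (\<Sum>S\<in>{S. S \<subseteq> I \<and> n \<le> card S}. (\<Prod>j\<in>S. P j y) * (\<Prod>j\<in>I - S. 1 - P j y)) /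
        (real (card I choose n) * \<xi> ^ n * y powr (\<alpha> * real n))) \<longlongrightarrow> 1) (at_right 0)"
  proof (rule Lim_transform_eventually[OF lim])
    show "\<forall>\<^sub>F y in at_right 0. (\<Sum>S\<in>\<S>. trm S y) / C =
        (\<Sum>S\<in>{S. S \<subseteq> I \<and> n \<le> card S}. (\<Prod>j\<in>S. P j y) * (\<Prod>j\<in>I - S. 1 - P j y)) /
        (real (card I choose n) * \<xi> ^ n * y powr (\<alpha> * real n))"
      using eventually_at_right_less
    proof eventually_elim
      case (elim y)
      have yp: "y powr (\<alpha> * real n) > 0" using elim by simp
      have tS: "trm S y * y powr (\<alpha> * real n) = (\<Prod>j\<in>S. P j y) * (\<Prod>j\<in>I - S. 1 - P j y)" if "S \<in> \<S>" for S
      proof -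
        have fin: "finite S" using that I unfolding \<S>_def by (auto intro: finite_subset)
        have "(\<Prod>j\<in>S. P j y / y powr \<alpha>) = (\<Prod>j\<in>S. P j y) / (y powr \<alpha>) ^ card S"
          by (simp add: prod_dividef)
        also have "(y powr \<alpha>) ^ card S = y powr (\<alpha> * real (card S))"
          using elim by (simp add: powr_realpow[symmetric] powr_powr)
        finally have a1: "(\<Prod>j\<in>S. P j y / y powr \<alpha>) = (\<Prod>j\<in>S. P j y) / y powr (\<alpha> * real (card S))" .
        have a2: "y powr (\<alpha> * (real (card S) - real n)) * y powr (\<alpha> * real n) = y powr (\<alpha> * real (card S))"
          by (simp add: powr_add[symmetric] algebra_simps)
        have "trm S y * y powr (\<alpha> * real n) = (\<Prod>j\<in>S. P j y / y powr \<alpha>) * (y powr (\<alpha> * (real (card S) - real n)) * y powr (\<alpha> * real n)) * (\<Prod>j\<in>I - S. 1 - P j y)"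
          unfolding trm_def by (simp only: mult_ac)
        also have "\<dots> = (\<Prod>j\<in>S. P j y) * (\<Prod>j\<in>I - S. 1 - P j y)"
          unfolding a1 a2 using elim by simp
        finally show ?thesis .
      qed
      have "(\<Sum>S\<in>\<S>. trm S y) / C = (\<Sum>S\<in>\<S>. trm S y) * y powr (\<alpha> * real n) / (C * y powr (\<alpha> * real n))"
        using yp by simp
      also have "(\<Sum>S\<in>\<S>. trm S y) * y powr (\<alpha> * real n) = (\<Sum>S\<in>\<S>. (\<Prod>j\<in>S. P j y) * (\<Prod>j\<in>I - S. 1 - P j y))"
        by (simp add: sum_distrib_right tS)
      finally show ?case unfolding \<S>_def C_def by simp
    qed
  qed
qed




lemma not_nonpos_pos: "(x::real) > 0 \<Longrightarrow> x \<notin> \<int>\<^sub>\<le>\<^sub>0"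
  by (auto elim!: nonpos_Ints_cases)

lemma dup_real:
  fixes x :: real
  assumes x: "x > 0"
  shows "Gamma x * Gamma (x + 1/2) = 2 powr (1 - 2*x) * sqrt pi * Gamma (2*x)"
proof -
  have c1: "complex_of_real x \<notin> \<int>\<^sub>\<le>\<^sub>0" using x by (simp add: of_real_in_nonpos_Ints_iff not_nonpos_pos)
  have c2: "complex_of_real x + 1/2 \<notin> \<int>\<^sub>\<le>\<^sub>0"
  proof -
    have "complex_of_real x + 1/2 = complex_of_real (x + 1/2)" by simp
    then show ?thesis using x by (simp only: of_real_in_nonpos_Ints_iff) (simp add: not_nonpos_pos)
  qed
  have "Gamma (complex_of_real x) * Gamma (complex_of_real x + 1/2) =
        exp ((1 - 2 * complex_of_real x) * of_real (ln 2)) * of_real (sqrt pi) * Gamma (2 * complex_of_real x)"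
    by (rule Gamma_legendre_duplication[OF c1 c2])
  moreover have "Gamma (complex_of_real x) * Gamma (complex_of_real x + 1/2) = complex_of_real (Gamma x * Gamma (x + 1/2))"
  proof -
    have "complex_of_real x + 1/2 = complex_of_real (x + 1/2)" by simp
    then show ?thesis by (simp only: Gamma_complex_of_real of_real_mult)
  qed
  moreover have "exp ((1 - 2 * complex_of_real x) * of_real (ln 2)) * of_real (sqrt pi) * Gamma (2 * complex_of_real x)
      = complex_of_real (2 powr (1 - 2*x) * sqrt pi * Gamma (2*x))"
  proof -
    have "(1 - 2 * complex_of_real x) * of_real (ln 2) = complex_of_real ((1 - 2*x) * ln 2)" by simp
    then have "exp ((1 - 2 * complex_of_real x) * of_real (ln 2)) = complex_of_real (exp ((1 - 2*x) * ln 2))"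
      by (simp only: exp_of_real)
    moreover have "exp ((1 - 2*x) * ln 2) = 2 powr (1 - 2*x)" by (simp add: powr_def mult.commute)
    ultimately have e: "exp ((1 - 2 * complex_of_real x) * of_real (ln 2)) = complex_of_real (2 powr (1 - 2*x))" by simp
    have "2 * complex_of_real x = complex_of_real (2*x)" by simp
    then have g: "Gamma (2 * complex_of_real x) = complex_of_real (Gamma (2*x))" by (metis Gamma_complex_of_real)
    show ?thesis unfolding e g of_real_mult ..
  qed
  ultimately show ?thesis by (metis of_real_eq_iff)
qed

lemma phi_eq:
  assumes ms: "ms > 0" "ms < ml"
  shows "phi_const ms ml = ms powr (ms-1) / Gamma ms * (ml powr ms * Gamma (ml - ms) / Gamma ml) * Gamma (2*ms+1)"
proof -
  define x where "x = ml - ms"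
  have x: "x > 0" unfolding x_def using ms by simp
  have ml: "ml > 0" using ms by simp
  have Gx: "Gamma (x + 1/2) > 0" "Gamma x > 0" "Gamma ms > 0" "Gamma ml > 0" "Gamma (2*ms) > 0"
    using x ms ml by (auto intro!: Gamma_real_pos)
  have D: "Gamma (2*x) = Gamma x * Gamma (x + 1/2) / (2 powr (1 - 2*x) * sqrt pi)"
    using dup_real[OF x] by (simp add: field_simps)
  have four: "4 powr (ms - ml + 1) = 2 powr (2 - 2*x)"
  proof -
    have "(4::real) = 2 powr 2" by simp
    then have "(4::real) powr (ms - ml + 1) = (2 powr 2) powr (ms - ml + 1)" by simp
    also have "\<dots> = 2 powr (2 * (ms - ml + 1))" by (rule powr_powr)
    also have "2 * (ms - ml + 1) = 2 - 2*x" unfolding x_def by simp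
    finally show ?thesis .
  qed
  have two: "2 powr (2 - 2*x) / 2 powr (1 - 2*x) = (2::real)"
    by (simp add: powr_diff[symmetric])
  have G2: "Gamma (2*ms+1) = 2*ms * Gamma (2*ms)"
    using Gamma_plus1[of "2*ms"] ms by (simp add: not_nonpos_pos)
  have "phi_const ms ml = sqrt pi * 2 powr (2 - 2*x) * (ms * ml) powr ms * Gamma (2*ms) * Gamma (2*x) / (Gamma ms * Gamma ml * Gamma (x + 1/2))"
    unfolding phi_const_def four unfolding x_def by (simp add: algebra_simps)
  also have "\<dots> = (2 powr (2 - 2*x) / 2 powr (1 - 2*x)) * (ms * ml) powr ms * Gamma (2*ms) * Gamma x / (Gamma ms * Gamma ml)"
    unfolding D using Gx by (simp add: field_simps)
  also have "\<dots> = 2 * (ms powr ms * ml powr ms) * Gamma (2*ms) * Gamma x / (Gamma ms * Gamma ml)"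
    unfolding two using ms ml by (simp add: powr_mult)
  also have "\<dots> = ms powr (ms-1) / Gamma ms * (ml powr ms * Gamma (ml - ms) / Gamma ml) * Gamma (2*ms+1)"
  proof -
    have "ms powr ms = ms powr (ms - 1) * ms" using ms by (simp add: powr_diff)
    then show ?thesis unfolding G2 x_def using Gx by (simp add: field_simps)
  qed
  finally show ?thesis .
qed

lemma zeta_eq:
  assumes ms: "ms > 0" "ms < ml" and K: "K \<ge> 1"
  shows "(ms powr (ms-1) / Gamma ms * (ml powr ms * Gamma (ml - ms) / Gamma ml) * Gamma (2*ms+1)) ^ K
          / Gamma (2*ms * real K + 1) = zeta1 K ms ml"
proof -
  have p: "2 * ms * real K > 0" using ms K by simp
  have "Gamma (2*ms * real K + 1) = 2*ms * real K * Gamma (2*ms * real K)"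
    using Gamma_plus1[of "2*ms*real K"] p by (simp add: not_nonpos_pos)
  then show ?thesis unfolding zeta1_def phi_eq[OF ms] by simp
qed




lemma ord_stat_mono:
  assumes le: "\<And>j. X j \<omega> \<le> Y j \<omega>" and n: "1 \<le> n" "n \<le> N"
  shows "ord_stat N X n \<omega> \<le> ord_stat N Y n \<omega>"
proof -
  define y where "y = ord_stat N Y n \<omega>"
  have "n \<le> card {j\<in>{1..N}. Y j \<omega> \<le> y}" using ord_stat_le_iff[OF n, of Y \<omega> y] unfolding y_def by simp
  also have "\<dots> \<le> card {j\<in>{1..N}. X j \<omega> \<le> y}"
    by (intro card_mono) (auto intro: order.trans[OF le])
  finally show ?thesis using ord_stat_le_iff[OF n, of X \<omega> y] unfolding y_def by simp
qed

lemma phase_err_bound: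
  "\<bar>phase_err b th G g k n \<omega>\<bar> \<le> pi / 2 ^ b"
proof -
  define D where "D = qstep b"
  have D: "D > 0" unfolding D_def qstep_def by simp
  define x where "x = phase_bar th G g k n \<omega>"
  define t where "t = x / D"
  have xt: "x = D * t" unfolding t_def using D by simp
  have e: "phase_err b th G g k n \<omega> = D * (of_int \<lfloor>t\<rfloor> + 1/2 - t)"
    unfolding phase_err_def phase_hat_def D_def[symmetric] x_def[symmetric] t_def[symmetric]
  proof -
    have "D * (of_int \<lfloor>t\<rfloor> + 1/2) - x = D * (of_int \<lfloor>t\<rfloor> + 1/2 - t)" using xt by (simp add: algebra_simps)
    then show "D * (of_int \<lfloor>t\<rfloor> + 1/2) - x = D * (of_int \<lfloor>t\<rfloor> + 1/2 - t)" .
  qed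
  have f: "of_int \<lfloor>t\<rfloor> \<le> t" "t < of_int \<lfloor>t\<rfloor> + 1" by linarith+
  have "\<bar>of_int \<lfloor>t\<rfloor> + 1/2 - t\<bar> \<le> 1/2" using f by linarith
  then have "\<bar>phase_err b th G g k n \<omega>\<bar> \<le> D * (1/2)" unfolding e using D by (simp add: abs_mult)
  also have "D * (1/2) = pi / 2 ^ b" unfolding D_def qstep_def by simp
  finally show ?thesis .
qed

lemma cos_ge_quant:
  assumes b: "b \<ge> 2"
  shows "cos (pi / 2 ^ b) \<le> cos (phase_err b th G g k n \<omega>)"
proof -
  have p: "pi / 2 ^ b \<le> pi" by (simp add: field_simps)
  have "cos (phase_err b th G g k n \<omega>) = cos \<bar>phase_err b th G g k n \<omega>\<bar>" by simp
  moreover have "cos (pi / 2 ^ b) \<le> cos \<bar>phase_err b th G g k n \<omega>\<bar>"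
    using phase_err_bound[of b th G g k n \<omega>] p by (intro cos_monotone_0_pi_le) auto
  ultimately show ?thesis by simp
qed

lemma Y_disc_ge_L:
  assumes b: "b \<ge> 2" and beta: "\<beta> > 0"
  shows "L_low K b \<beta> G g n \<omega> \<le> Y_disc K b \<beta> th G g n \<omega>"
proof -
  define r where "r k = cmod (G k n \<omega>) * cmod (g k n \<omega>)" for k
  define e where "e k = phase_err b th G g k n \<omega>" for k
  have r0: "r k \<ge> 0" for k unfolding r_def by simp
  have "cos (pi / 2 ^ b) * (\<Sum>k=1..K. r k) = (\<Sum>k=1..K. r k * cos (pi / 2 ^ b))"
    by (simp add: sum_distrib_right mult.commute)
  also have "\<dots> \<le> (\<Sum>k=1..K. r k * cos (e k))"
    unfolding e_def using cos_ge_quant[OF b] r0 by (intro sum_mono mult_left_mono) auto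
  also have "\<dots> = Re (\<Sum>k=1..K. complex_of_real (r k) * cis (e k))"
    by (simp add: Re_sum)
  also have "\<dots> \<le> cmod (\<Sum>k=1..K. complex_of_real (r k) * cis (e k))"
    by (rule complex_Re_le_cmod)
  finally have "cos (pi / 2 ^ b) * (\<Sum>k=1..K. r k) \<le> cmod (\<Sum>k=1..K. complex_of_real (r k) * cis (e k))" .
  then have "\<beta> * (cos (pi / 2 ^ b) * (\<Sum>k=1..K. r k)) \<le> \<beta> * cmod (\<Sum>k=1..K. complex_of_real (r k) * cis (e k))"
    using beta by (intro mult_left_mono) auto
  then show ?thesis unfolding L_low_def Y_disc_def r_def e_def by (simp add: mult_ac)
qed

context prob_space begin

lemma ord_event_eq:
  assumes n: "1 \<le> n" "n \<le> N"
  shows "{\<omega>\<in>space M. ord_stat N X n \<omega> \<le> y} = {\<omega>\<in>space M. n \<le> card {j\<in>{1..N}. X j \<omega> \<le> y}}"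
  by (intro Collect_cong conj_cong refl ord_stat_le_iff[OF n])

lemma ord_event_meas:
  assumes n: "1 \<le> n" "n \<le> N" and X: "\<And>j. j \<in> {1..N} \<Longrightarrow> X j \<in> borel_measurable M"
  shows "{\<omega>\<in>space M. ord_stat N X n \<omega> \<le> y} \<in> events"
proof -
  have "(\<lambda>\<omega>. \<Sum>j\<in>{1..N}. if X j \<omega> \<le> y then 1 else (0::real)) \<in> borel_measurable M"
    using X by (intro borel_measurable_sum) measurable
  then have m: "{\<omega>\<in>space M. real n \<le> (\<Sum>j\<in>{1..N}. if X j \<omega> \<le> y then 1 else (0::real))} \<in> events" by measurable
  have "{\<omega>\<in>space M. n \<le> card {j\<in>{1..N}. X j \<omega> \<le> y}} = {\<omega>\<in>space M. real n \<le> (\<Sum>j\<in>{1..N}. if X j \<omega> \<le> y then 1 else (0::real))}"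
  proof (intro Collect_cong conj_cong refl)
    fix \<omega>
    have "(n \<le> card {j\<in>{1..N}. X j \<omega> \<le> y}) = (real n \<le> real (card {j\<in>{1..N}. X j \<omega> \<le> y}))" by (simp only: of_nat_le_iff)
    also have "real (card {j\<in>{1..N}. X j \<omega> \<le> y}) = (\<Sum>j\<in>{1..N}. if X j \<omega> \<le> y then 1 else (0::real))"
      by (rule card_as_sum) simp
    finally show "(n \<le> card {j\<in>{1..N}. X j \<omega> \<le> y}) = (real n \<le> (\<Sum>j\<in>{1..N}. if X j \<omega> \<le> y then 1 else (0::real)))" .
  qed
  with m ord_event_eq[OF n] show ?thesis by simp
qed

lemma indep_pair:
  fixes X :: "'i \<Rightarrow> 'a \<Rightarrow> complex"
  assumes ind: "indep_vars (\<lambda>_. borel) X I" and i: "i1 \<in> I" "i2 \<in> I" "i1 \<noteq> i2"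
    and h: "h1 \<in> borel_measurable borel" "h2 \<in> borel_measurable borel"
  shows "indep_var borel (\<lambda>\<omega>. h1 (X i1 \<omega>)) borel (\<lambda>\<omega>. h2 (X i2 \<omega>))"
proof -
  have r: "indep_var (PiM {i1} (\<lambda>_. borel)) (\<lambda>\<omega>. restrict (\<lambda>i. X i \<omega>) {i1}) (PiM {i2} (\<lambda>_. borel)) (\<lambda>\<omega>. restrict (\<lambda>i. X i \<omega>) {i2})"
    using i by (intro indep_var_restrict[OF ind]) auto
  have m1: "(\<lambda>f. h1 (f i1)) \<in> measurable (PiM {i1} (\<lambda>_. borel)) borel"
    using measurable_compose[OF measurable_component_singleton[of i1 "{i1}" "\<lambda>_. borel"] h(1)] by simp
  have m2: "(\<lambda>f. h2 (f i2)) \<in> measurable (PiM {i2} (\<lambda>_. borel)) borel"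
    using measurable_compose[OF measurable_component_singleton[of i2 "{i2}" "\<lambda>_. borel"] h(2)] by simp
  from indep_var_compose[OF r m1 m2] show ?thesis by (simp add: comp_def)
qed

lemma indep_group:
  fixes X :: "'i \<Rightarrow> 'a \<Rightarrow> complex" and f :: "'l \<Rightarrow> 'a \<Rightarrow> real"
  assumes ind: "indep_vars (\<lambda>_. borel) X I" and sub: "\<And>l. l \<in> L \<Longrightarrow> Kf l \<subseteq> I"
    and dis: "disjoint_family_on Kf L"
    and \<Phi>: "\<And>l. l \<in> L \<Longrightarrow> \<Phi> l \<in> borel_measurable (PiM (Kf l) (\<lambda>_. borel))"
    and f: "\<And>l \<omega>. l \<in> L \<Longrightarrow> f l \<omega> = \<Phi> l (restrict (\<lambda>i. X i \<omega>) (Kf l))"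
  shows "indep_vars (\<lambda>_. borel) f L"
proof -
  have "indep_vars (\<lambda>l. PiM (Kf l) (\<lambda>_. borel)) (\<lambda>l \<omega>. restrict (\<lambda>i. X i \<omega>) (Kf l)) L"
    by (rule indep_vars_restrict[OF ind sub dis])
  from indep_vars_compose2[OF this \<Phi>]
  have "indep_vars (\<lambda>_. borel) (\<lambda>l \<omega>. \<Phi> l (restrict (\<lambda>i. X i \<omega>) (Kf l))) L" .
  then show ?thesis by (subst indep_vars_cong[OF refl _ refl]) (auto simp: f fun_eq_iff)
qed

end



theorem lemma2:
  fixes M :: "'a measure" and N K b n :: nat and \<beta> mG mg :: real
    and G g :: "nat \<Rightarrow> nat \<Rightarrow> 'a \<Rightarrow> complex" and th :: "nat \<Rightarrow> real"
  assumes "prob_space M"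
    and "N \<ge> 1" and "K \<ge> 1" and "b \<ge> 2" and "0 < \<beta>" and "\<beta> \<le> 1"
    and "mG \<ge> 1/2" and "mg \<ge> 1/2" and "mG \<noteq> mg"
    and "prob_space.indep_vars M (\<lambda>_. borel) (\<lambda>(c, k, j). if c then G k j else g k j) ((UNIV :: bool set) \<times> {1..K} \<times> {1..N})"
    and "\<forall>k\<in>{1..K}. \<forall>j\<in>{1..N}. distributed M lborel (\<lambda>\<omega>. cmod (G k j \<omega>)) (\<lambda>x. ennreal (nakagami_pdf mG x))"
    and "\<forall>k\<in>{1..K}. \<forall>j\<in>{1..N}. distributed M lborel (\<lambda>\<omega>. cmod (g k j \<omega>)) (\<lambda>x. ennreal (nakagami_pdf mg x))"
    and "\<forall>j\<in>{1..N}. 0 \<le> th j \<and> th j < 2 * pi"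
    and "n \<in> {1..N}"
  shows "(AE \<omega> in M. ord_stat N (Y_disc K b \<beta> th G g) n \<omega> \<ge> ord_stat N (L_low K b \<beta> G g) n \<omega>)
    \<and> (\<forall>y\<ge>0. cdf_of M (ord_stat N (Y_disc K b \<beta> th G g) n) y \<le> cdf_of M (ord_stat N (L_low K b \<beta> G g) n) y)
    \<and> (cdf_of M (ord_stat N (L_low K b \<beta> G g) n) \<sim>[at_right 0]
        asym_cdf N n K (min mG mg)
          (zeta1 K (min mG mg) (max mG mg) / (\<beta> * cos (pi / 2 ^ b)) powr (2 * min mG mg * real K)))
    \<and> (cdf_of M (ord_stat N (Y_cont K \<beta> G g) n) \<sim>[at_right 0]
        asym_cdf N n K (min mG mg)
          (zeta1 K (min mG mg) (max mG mg) / \<beta> powr (2 * min mG mg * real K)))"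
proof -
  interpret P: prob_space M by fact
  note ind = assms(10)
  define X where "X = (\<lambda>(c, k, j). if c then G k j else g k j)"
  define I0 where "I0 = (UNIV :: bool set) \<times> {1..K} \<times> {1..N}"
  have ind0: "P.indep_vars (\<lambda>_. borel) X I0" using ind unfolding X_def I0_def .
  have n: "1 \<le> n" "n \<le> N" using assms(14) by auto
  have Gm: "G k j \<in> borel_measurable M" if "k \<in> {1..K}" "j \<in> {1..N}" for k j
  proof -
    have "X (True, k, j) \<in> borel_measurable M" using ind0 that unfolding P.indep_vars_def I0_def by auto
    then show ?thesis unfolding X_def by simp
  qed
  have gm: "g k j \<in> borel_measurable M" if "k \<in> {1..K}" "j \<in> {1..N}" for k j
  proof -
    have "X (False, k, j) \<in> borel_measurable M" using ind0 that unfolding P.indep_vars_def I0_def by auto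
    then show ?thesis unfolding X_def by simp
  qed
  define S where "S j \<omega> = (\<Sum>k\<in>{1..K}. cmod (G k j \<omega>) * cmod (g k j \<omega>))" for j \<omega>
  have Rm: "(\<lambda>\<omega>. cmod (G k j \<omega>) * cmod (g k j \<omega>)) \<in> borel_measurable M" if "k \<in> {1..K}" "j \<in> {1..N}" for k j
  proof -
    note [measurable] = Gm[OF that] gm[OF that]
    show ?thesis by measurable
  qed
  have Sm: "S j \<in> borel_measurable M" if "j \<in> {1..N}" for j
    unfolding S_def using Rm that by (intro borel_measurable_sum) auto
  define d where "d = \<beta> * cos (pi / 2 ^ b)"
  have cpos: "cos (pi / 2 ^ b) > 0"
  proof -
    have "pi / 2 ^ b \<le> pi / 2 ^ 2" using assms(4) by (intro divide_left_mono power_increasing) auto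
    also have "\<dots> < pi / 2" by simp
    finally have "pi / 2 ^ b < pi / 2" .
    moreover have "0 \<le> pi / 2 ^ b" by simp
    ultimately show ?thesis by (intro cos_gt_zero_pi) linarith+
  qed
  have d: "d > 0" unfolding d_def using cpos assms(5) by simp
  have Leq: "L_low K b \<beta> G g j = (\<lambda>\<omega>. d * S j \<omega>)" for j
    unfolding L_low_def d_def S_def by auto
  have Ceq: "Y_cont K \<beta> G g j = (\<lambda>\<omega>. \<beta> * S j \<omega>)" for j
    unfolding Y_cont_def S_def by auto
  have le: "ord_stat N (L_low K b \<beta> G g) n \<omega> \<le> ord_stat N (Y_disc K b \<beta> th G g) n \<omega>" for \<omega>
    using n by (intro ord_stat_mono Y_disc_ge_L assms(4,5))
  have part1: "AE \<omega> in M. ord_stat N (Y_disc K b \<beta> th G g) n \<omega> \<ge> ord_stat N (L_low K b \<beta> G g) n \<omega>"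
    using le by simp
  have part2: "\<forall>y\<ge>0. cdf_of M (ord_stat N (Y_disc K b \<beta> th G g) n) y \<le> cdf_of M (ord_stat N (L_low K b \<beta> G g) n) y"
  proof (intro allI impI)
    fix y :: real
    have "{\<omega>\<in>space M. ord_stat N (L_low K b \<beta> G g) n \<omega> \<le> y} \<in> P.events"
      using n Sm unfolding Leq by (intro P.ord_event_meas) auto
    moreover have "{\<omega>\<in>space M. ord_stat N (Y_disc K b \<beta> th G g) n \<omega> \<le> y} \<subseteq> {\<omega>\<in>space M. ord_stat N (L_low K b \<beta> G g) n \<omega> \<le> y}"
      using le by (auto intro: order.trans)
    ultimately show "cdf_of M (ord_stat N (Y_disc K b \<beta> th G g) n) y \<le> cdf_of M (ord_stat N (L_low K b \<beta> G g) n) y"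
      unfolding cdf_of_def by (intro P.finite_measure_mono)
  qed
  define ms where "ms = min mG mg"
  define ml where "ml = max mG mg"
  have ms: "ms \<ge> 1/2" "ms < ml" unfolding ms_def ml_def using assms(7,8,9) by auto
  define \<theta> where "\<theta> = min 1 ((ml - ms) / 2)"
  have th: "0 < \<theta>" "\<theta> \<le> 1" "ms + \<theta> < ml"
  proof -
    have "min 1 ((ml - ms) / 2) \<le> (ml - ms) / 2" by (rule min.cobounded2)
    moreover have "\<And>t. t \<le> (ml - ms) / 2 \<Longrightarrow> ms + t < ml" using ms by (simp add: field_simps)
    ultimately show "ms + \<theta> < ml" unfolding \<theta>_def by blast
  qed (unfold \<theta>_def, use ms in auto)
  define A where "A = ms powr (ms-1) / Gamma ms * (ml powr ms * Gamma (ml - ms) / Gamma ml)"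
  define Bp where "Bp = (2 * ms powr ms / Gamma ms * ms powr \<theta> / (2*ms+2*\<theta>)) * (ml powr (ms+\<theta>) * Gamma (ml - (ms+\<theta>)) / Gamma ml)"
  have Gp: "Gamma ms > 0" "Gamma ml > 0" "Gamma (ml - ms) > 0" "Gamma (ml - (ms+\<theta>)) > 0"
    using ms th by (auto intro!: Gamma_real_pos)
  have A0: "A > 0" unfolding A_def using Gp ms by auto
  have B0: "Bp \<ge> 0" unfolding Bp_def using Gp ms th by auto
  have inI0: "(c, k, j) \<in> I0" if "k \<in> {1..K}" "j \<in> {1..N}" for c k j using that unfolding I0_def by auto
  have Rb: "cdf_of M (\<lambda>\<omega>. cmod (G k j \<omega>) * cmod (g k j \<omega>)) u \<le> A * u powr (2*ms) \<and>
      A * u powr (2*ms) \<le> cdf_of M (\<lambda>\<omega>. cmod (G k j \<omega>) * cmod (g k j \<omega>)) u + Bp * u powr (2*ms + 2*\<theta>)"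
    if kj: "k \<in> {1..K}" "j \<in> {1..N}" and u: "0 \<le> u" for k j u
  proof -
    have dG: "distributed M lborel (\<lambda>\<omega>. cmod (G k j \<omega>)) (\<lambda>x. ennreal (nakagami_pdf mG x))" using assms(11) kj by auto
    have dg: "distributed M lborel (\<lambda>\<omega>. cmod (g k j \<omega>)) (\<lambda>x. ennreal (nakagami_pdf mg x))" using assms(12) kj by auto
    have i1: "P.indep_var borel (\<lambda>\<omega>. cmod (G k j \<omega>)) borel (\<lambda>\<omega>. cmod (g k j \<omega>))"
      using P.indep_pair[OF ind0 inI0[OF kj, of True] inI0[OF kj, of False], of cmod cmod] by (simp add: X_def)
    have i2: "P.indep_var borel (\<lambda>\<omega>. cmod (g k j \<omega>)) borel (\<lambda>\<omega>. cmod (G k j \<omega>))"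
      using P.indep_pair[OF ind0 inI0[OF kj, of False] inI0[OF kj, of True], of cmod cmod] by (simp add: X_def)
    show ?thesis
    proof (cases "mG < mg")
      case True
      then have e: "ms = mG" "ml = mg" unfolding ms_def ml_def by auto
      show ?thesis using P.prod_bounds[OF dG dg i1 _ _ th(1,2) _ u] assms(7) True th(3)
        unfolding A_def Bp_def e by auto
    next
      case False
      then have lt: "mg < mG" using assms(9) by auto
      then have e: "ms = mg" "ml = mG" unfolding ms_def ml_def by auto
      have c: "(\<lambda>\<omega>. cmod (g k j \<omega>) * cmod (G k j \<omega>)) = (\<lambda>\<omega>. cmod (G k j \<omega>) * cmod (g k j \<omega>))"
        by (simp add: mult.commute)
      show ?thesis using P.prod_bounds[OF dg dG i2 _ _ th(1,2) _ u] assms(8) lt th(3)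
        unfolding A_def Bp_def e c by auto
    qed
  qed
  have comp: "(\<lambda>h. h i) \<in> measurable (PiM J (\<lambda>_. borel)) (borel :: complex measure)" if "i \<in> J" for i and J :: "(bool \<times> nat \<times> nat) set"
    using measurable_component_singleton[OF that, of "\<lambda>_. borel"] by simp
  have indR: "P.indep_vars (\<lambda>_. borel) (\<lambda>k \<omega>. cmod (G k j \<omega>) * cmod (g k j \<omega>)) {1..K}" if j: "j \<in> {1..N}" for j
  proof (rule P.indep_group[OF ind0, where Kf="\<lambda>k. {(True,k,j),(False,k,j)}" and \<Phi>="\<lambda>k h. cmod (h (True,k,j)) * cmod (h (False,k,j))"])
    show "\<And>k. k \<in> {1..K} \<Longrightarrow> {(True,k,j),(False,k,j)} \<subseteq> I0" using inI0 j by auto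
    show "disjoint_family_on (\<lambda>k. {(True,k,j),(False,k,j)}) {1..K}" unfolding disjoint_family_on_def by auto
    fix k assume k: "k \<in> {1..K}"
    note [measurable] = comp[of "(True,k,j)" "{(True,k,j),(False,k,j)}"] comp[of "(False,k,j)" "{(True,k,j),(False,k,j)}"]
    show "(\<lambda>h. cmod (h (True,k,j)) * cmod (h (False,k,j))) \<in> borel_measurable (PiM {(True,k,j),(False,k,j)} (\<lambda>_. borel))"
      by measurable
    fix \<omega>
    show "cmod (G k j \<omega>) * cmod (g k j \<omega>) = cmod (restrict (\<lambda>i. X i \<omega>) {(True,k,j),(False,k,j)} (True,k,j)) * cmod (restrict (\<lambda>i. X i \<omega>) {(True,k,j),(False,k,j)} (False,k,j))"
      by (simp add: X_def)
  qed
  define \<alpha> where "\<alpha> = 2 * ms * real K"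
  have alpha: "\<alpha> > 0" unfolding \<alpha>_def using ms assms(3) by simp
  define AK where "AK = (A * Gamma (2*ms+1)) ^ K / Gamma (2*ms * real K + 1)"
  have AK0: "AK > 0" unfolding AK_def using A0 ms alpha unfolding \<alpha>_def by (auto intro!: Gamma_real_pos)
  have AKz: "AK = zeta1 K ms ml" unfolding AK_def A_def using ms assms(3) by (intro zeta_eq) auto
  have Sasym: "cdf_of M (S j) \<sim>[at_right 0] (\<lambda>u. AK * u powr \<alpha>)" if j: "j \<in> {1..N}" for j
  proof -
    have a1: "2 * ms \<ge> 1" using ms by simp
    have eta: "2 * \<theta> > 0" using th by simp
    have ex: "\<exists>B'. B' \<ge> 0 \<and> (\<forall>u. 0 \<le> u \<longrightarrow> u \<le> 1 \<longrightarrow>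
      cdf_of M (\<lambda>\<omega>. \<Sum>k\<in>{1..K}. cmod (G k j \<omega>) * cmod (g k j \<omega>)) u \<le> (A * Gamma (2*ms+1)) ^ K / Gamma (2*ms * real K + 1) * u powr (2*ms * real K) \<and>
      (A * Gamma (2*ms+1)) ^ K / Gamma (2*ms * real K + 1) * u powr (2*ms * real K) \<le>
         cdf_of M (\<lambda>\<omega>. \<Sum>k\<in>{1..K}. cmod (G k j \<omega>) * cmod (g k j \<omega>)) u + B' * u powr (2*ms * real K + 2*\<theta>))"
      by (rule P.sum_bounds[OF assms(3) indR[OF j] a1 eta less_imp_le[OF A0] B0]) (use Rb j in auto)
    then obtain B' where B'b: "\<forall>u. 0 \<le> u \<longrightarrow> u \<le> 1 \<longrightarrow>
      cdf_of M (\<lambda>\<omega>. \<Sum>k\<in>{1..K}. cmod (G k j \<omega>) * cmod (g k j \<omega>)) u \<le> (A * Gamma (2*ms+1)) ^ K / Gamma (2*ms * real K + 1) * u powr (2*ms * real K) \<and>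
      (A * Gamma (2*ms+1)) ^ K / Gamma (2*ms * real K + 1) * u powr (2*ms * real K) \<le>
         cdf_of M (\<lambda>\<omega>. \<Sum>k\<in>{1..K}. cmod (G k j \<omega>) * cmod (g k j \<omega>)) u + B' * u powr (2*ms * real K + 2*\<theta>)"
      by (elim exE conjE)
    have Seq: "(\<lambda>\<omega>. \<Sum>k\<in>{1..K}. cmod (G k j \<omega>) * cmod (g k j \<omega>)) = S j" unfolding S_def by simp
    show ?thesis
    proof (rule sq_asymp[OF AK0 eta, where B=B'])
      fix u :: real assume "0 \<le> u" "u \<le> 1"
      then show "cdf_of M (S j) u \<le> AK * u powr \<alpha> \<and> AK * u powr \<alpha> \<le> cdf_of M (S j) u + B' * u powr (\<alpha> + 2 * \<theta>)"
        using B'b unfolding Seq AK_def \<alpha>_def by blast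
    qed
  qed
  have gen: "cdf_of M (ord_stat N (\<lambda>j \<omega>. c * S j \<omega>) n) \<sim>[at_right 0]
      asym_cdf N n K ms (zeta1 K ms ml / c powr \<alpha>)" if c: "c > 0" for c
  proof -
    define V where "V j \<omega> = c * S j \<omega>" for j \<omega>
    have indV: "P.indep_vars (\<lambda>_. borel) V {1..N}"
    proof (rule P.indep_group[OF ind0, where Kf="\<lambda>j. UNIV \<times> {1..K} \<times> {j}"
          and \<Phi>="\<lambda>j h. c * (\<Sum>k\<in>{1..K}. cmod (h (True,k,j)) * cmod (h (False,k,j)))"])
      show "\<And>j. j \<in> {1..N} \<Longrightarrow> UNIV \<times> {1..K} \<times> {j} \<subseteq> I0" unfolding I0_def by auto
      show "disjoint_family_on (\<lambda>j. UNIV \<times> {1..K} \<times> {j}) {1..N}" unfolding disjoint_family_on_def by auto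
      fix j assume j: "j \<in> {1..N}"
      have "(\<lambda>h. cmod (h (True,k,j)) * cmod (h (False,k,j))) \<in> borel_measurable (PiM (UNIV \<times> {1..K} \<times> {j}) (\<lambda>_. borel))"
        if k: "k \<in> {1..K}" for k
      proof -
        have m1: "(True,k,j) \<in> UNIV \<times> {1..K} \<times> {j}" "(False,k,j) \<in> UNIV \<times> {1..K} \<times> {j}" using k by auto
        note [measurable] = comp[OF m1(1)] comp[OF m1(2)]
        show ?thesis by measurable
      qed
      then show "(\<lambda>h. c * (\<Sum>k\<in>{1..K}. cmod (h (True,k,j)) * cmod (h (False,k,j)))) \<in> borel_measurable (PiM (UNIV \<times> {1..K} \<times> {j}) (\<lambda>_. borel))"
        by (intro borel_measurable_times borel_measurable_const borel_measurable_sum) auto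
      fix \<omega>
      show "V j \<omega> = c * (\<Sum>k\<in>{1..K}. cmod (restrict (\<lambda>i. X i \<omega>) (UNIV \<times> {1..K} \<times> {j}) (True,k,j)) * cmod (restrict (\<lambda>i. X i \<omega>) (UNIV \<times> {1..K} \<times> {j}) (False,k,j)))"
        unfolding V_def S_def by (intro arg_cong2[where f="(*)"] refl sum.cong) (auto simp: X_def)
    qed
    define Pj where "Pj j y = cdf_of M (V j) y" for j y
    have Pj: "Pj j \<sim>[at_right 0] (\<lambda>y. (AK / c powr \<alpha>) * y powr \<alpha>)" if j: "j \<in> {1..N}" for j
    proof -
      have "Pj j = (\<lambda>y. cdf_of M (S j) (y / c))"
      proof
        fix y
        have "{\<omega>\<in>space M. V j \<omega> \<le> y} = {\<omega>\<in>space M. S j \<omega> \<le> y / c}"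
          unfolding V_def using c by (auto simp: field_simps)
        then show "Pj j y = cdf_of M (S j) (y / c)" unfolding Pj_def cdf_of_def by simp
      qed
      then show ?thesis using asymp_scale[OF Sasym[OF j] c] by simp
    qed
    have xi: "AK / c powr \<alpha> > 0" using AK0 c by simp
    have cdfeq: "cdf_of M (ord_stat N V n) = (\<lambda>y. \<Sum>S\<in>{S. S \<subseteq> {1..N} \<and> n \<le> card S}. (\<Prod>j\<in>S. Pj j y) * (\<Prod>j\<in>{1..N} - S. 1 - Pj j y))"
    proof
      fix y
      have "cdf_of M (ord_stat N V n) y = P.prob {\<omega>\<in>space M. n \<le> card {j\<in>{1..N}. V j \<omega> \<le> y}}"
        unfolding cdf_of_def P.ord_event_eq[OF n] ..
      also have "\<dots> = (\<Sum>S\<in>{S. S \<subseteq> {1..N} \<and> n \<le> card S}. (\<Prod>j\<in>S. Pj j y) * (\<Prod>j\<in>{1..N} - S. 1 - Pj j y))"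
        unfolding Pj_def cdf_of_def using n by (intro P.count_atleast indV) auto
      finally show "cdf_of M (ord_stat N V n) y = (\<Sum>S\<in>{S. S \<subseteq> {1..N} \<and> n \<le> card S}. (\<Prod>j\<in>S. Pj j y) * (\<Prod>j\<in>{1..N} - S. 1 - Pj j y))" .
    qed
    have e1: "cdf_of M (ord_stat N V n) \<sim>[at_right 0] (\<lambda>y. real (N choose n) * (AK / c powr \<alpha>) ^ n * y powr (\<alpha> * real n))"
      unfolding cdfeq using multi_asymp[of "{1..N}" n Pj "AK / c powr \<alpha>" \<alpha>] n Pj xi alpha by simp
    have e2: "asym_cdf N n K ms (AK / c powr \<alpha>) \<sim>[at_right 0] (\<lambda>y. real (N choose n) * (AK / c powr \<alpha>) ^ n * y powr (\<alpha> * real n))"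
      unfolding \<alpha>_def by (rule asym_cdf_asymp[OF n alpha[unfolded \<alpha>_def] xi[unfolded \<alpha>_def]])
    have "cdf_of M (ord_stat N V n) \<sim>[at_right 0] asym_cdf N n K ms (AK / c powr \<alpha>)"
      using asymp_equiv_trans[OF e1 asymp_equiv_symI[OF e2]] .
    then show ?thesis unfolding V_def AKz .
  qed
  have fL: "L_low K b \<beta> G g = (\<lambda>j \<omega>. d * S j \<omega>)" using Leq by (simp add: fun_eq_iff)
  have fC: "Y_cont K \<beta> G g = (\<lambda>j \<omega>. \<beta> * S j \<omega>)" using Ceq by (simp add: fun_eq_iff)
  have part3: "cdf_of M (ord_stat N (L_low K b \<beta> G g) n) \<sim>[at_right 0]
        asym_cdf N n K (min mG mg) (zeta1 K (min mG mg) (max mG mg) / (\<beta> * cos (pi / 2 ^ b)) powr (2 * min mG mg * real K))"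
    using gen[OF d] unfolding fL d_def ms_def ml_def \<alpha>_def .
  have part4: "cdf_of M (ord_stat N (Y_cont K \<beta> G g) n) \<sim>[at_right 0]
        asym_cdf N n K (min mG mg) (zeta1 K (min mG mg) (max mG mg) / \<beta> powr (2 * min mG mg * real K))"
    using gen[OF assms(5)] unfolding fC ms_def ml_def \<alpha>_def .
  show ?thesis using part1 part2 part3 part4 by blast
qed



end
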